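(* Let $0=t_0<\dots<t_N=1$ and let $\mu^\star_{t_0},\dots,\mu^\star_{t_N}$ be Gaussian measures on $\mathbb{R}$. Consider the Gaussian E-spline problem: minimize $\int_0^1\|\nabla_{v_t}v_t\|^2_{L^2(\gamma_t)}\,dt$ over curves $(\gamma_t)$ of Gaussian measures on $\mathbb{R}$ with tangent velocity fields $(v_t)$, subject to $\gamma_{t_i}=\mu^\star_{t_i}$ for all $i$. If this problem has an optimal solution $(\gamma^\star_t)$ which is a non-degenerate Gaussian for all $t\in[0,1]$, then $(\gamma^\star_t)$ is also the solution of the (unconstrained) E-spline problem on $\mathcal P_2(\mathbb{R})$.
   Context: The E-spline problem on the 2-Wasserstein space $\mathcal P_2(\mathbb{R})$: minimize $\int_0^1\|\nabla_{v_t}v_t\|^2_{L^2(\mu_t)}\,dt$ over curves $(\mu_t)$ in $\mathcal P_2(\mathbb{R})$ with tangent velocity fields $(v_t)$, subject to $\mu_{t_i}=\mu^\star_{t_i}$. Through the isometric embedding $\mu\mapsto F^{-1}_\mu$ (quantile function) of $\mathcal P_2(\mathbb{R})$ into $L^2[0,1]$, where the tangent field satisfies $\partial_tF^{-1}_{\mu_t}=v_t\circ F^{-1}_{\mu_t}$ and $\nabla_{v_t}v_t=\partial_tv_t+v_t'v_t$, the objective equals $\int_0^1\|\partial_t^2F^{-1}_{\mu_t}\|^2_{L^2[0,1]}dt$; this quantile formulation may be taken as the definition. *)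

theory Defs
  imports "HOL-Probability.Probability"
begin

definition P2 :: "real measure \<Rightarrow> bool" where
  "P2 \<mu> \<longleftrightarrow> prob_space \<mu> \<and> sets \<mu> = sets borel \<and> integrable \<mu> (\<lambda>x. x\<^sup>2)"

definition quantile :: "real measure \<Rightarrow> real \<Rightarrow> real" where
  "quantile \<mu> u = Inf {x. u \<le> measure \<mu> {..x}}"

text \<open>Gaussian measure N(m, s^2); s = 0 gives the degenerate Dirac measure at m.\<close>
definition gaussian :: "real \<Rightarrow> real \<Rightarrow> real measure" where
  "gaussian m s = (if s = 0 then return borel m else density lborel (normal_density m s))"

definition is_gaussian :: "real measure \<Rightarrow> bool" where
  "is_gaussian \<mu> \<longleftrightarrow> (\<exists>m s. s \<ge> 0 \<and> \<mu> = gaussian m s)"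

definition nondeg_gaussian :: "real measure \<Rightarrow> bool" where
  "nondeg_gaussian \<mu> \<longleftrightarrow> (\<exists>m s. s > 0 \<and> \<mu> = gaussian m s)"

text \<open>A curve (mu_t)_{t in [0,1]} in P_2(R) whose quantile curve t |-> F^{-1}_{mu_t}
  is twice differentiable in t (for every level u in (0,1)), with second time
  derivative A t u = d^2/dt^2 F^{-1}_{mu_t}(u).\<close>
definition admissible_curve :: "(real \<Rightarrow> real measure) \<Rightarrow> (real \<Rightarrow> real \<Rightarrow> real) \<Rightarrow> bool" where
  "admissible_curve \<mu> A \<longleftrightarrow>
     (\<forall>t\<in>{0..1}. P2 (\<mu> t)) \<and>
     (\<forall>u\<in>{0<..<1}. \<exists>V. \<forall>t\<in>{0..1}.
        ((\<lambda>s. quantile (\<mu> s) u) has_real_derivative V t) (at t within {0..1}) \<and>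
        (V has_real_derivative A t u) (at t within {0..1}))"

definition espline_cost :: "(real \<Rightarrow> real \<Rightarrow> real) \<Rightarrow> ennreal" where
  "espline_cost A = (\<integral>\<^sup>+ t. (\<integral>\<^sup>+ u. ennreal ((A t u)\<^sup>2) \<partial>lebesgue_on {0<..<1}) \<partial>lebesgue_on {0..1})"

definition interpolates :: "(real \<Rightarrow> real measure) \<Rightarrow> nat \<Rightarrow> (nat \<Rightarrow> real) \<Rightarrow> (nat \<Rightarrow> real measure) \<Rightarrow> bool" where
  "interpolates \<mu> N tt \<mu>s \<longleftrightarrow> (\<forall>i\<le>N. \<mu> (tt i) = \<mu>s i)"

end

theory Submission
  imports Defs "HOL-Real_Asymp.Real_Asymp"
begin

lemma P2_cdf_distribution: "P2 \<mu> \<Longrightarrow> cdf_distribution \<mu>"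
  unfolding P2_def cdf_distribution_def real_distribution_def real_distribution_axioms_def
  by auto

lemma quantile_galois:
  assumes "P2 \<mu>" "0 < u" "u < 1"
  shows "u \<le> measure \<mu> {..x} \<longleftrightarrow> quantile \<mu> u \<le> x"
proof -
  interpret cdf_distribution \<mu> using assms(1) by (rule P2_cdf_distribution)
  show ?thesis using pseudoinverse[OF assms(2,3), of x]
    by (simp add: quantile_def cdf_def)
qed

lemma quantile_mono: "P2 \<mu> \<Longrightarrow> mono_on {0<..<1} (quantile \<mu>)"
proof -
  assume "P2 \<mu>"
  then interpret cdf_distribution \<mu> by (rule P2_cdf_distribution)
  show ?thesis using mono_I unfolding quantile_def cdf_def .
qed

lemma quantile_eqI:
  assumes "P2 \<mu>" "0 < u" "u < 1" "\<And>x. u \<le> measure \<mu> {..x} \<longleftrightarrow> q \<le> x"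
  shows "quantile \<mu> u = q"
proof -
  have "\<And>x. quantile \<mu> u \<le> x \<longleftrightarrow> q \<le> x" using quantile_galois[OF assms(1-3)] assms(4) by simp
  from this[of q] this[of "quantile \<mu> u"] show ?thesis by simp
qed

lemma prob_space_gaussian01: "prob_space (gaussian 0 1)"
  by (simp add: gaussian_def prob_space_normal_density)

lemma P2_gaussian:
  assumes "s \<ge> 0" shows "P2 (gaussian m s)"
proof (cases "s = 0")
  case True
  then show ?thesis
  proof -
    have "integrable (return borel m) (\<lambda>x::real. x\<^sup>2)"
      by (subst integrable_iff_bounded) (simp add: nn_integral_return)
    then show ?thesis using True by (simp add: P2_def gaussian_def prob_space_return)
  qed
next
  case False
  then have s: "s > 0" using assms by simp
  have i: "integrable lborel (\<lambda>x. normal_density m s x * (x - m)^k)" for k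
    using s by (rule integrable_normal_moment)
  have "integrable lborel (\<lambda>x. normal_density m s x * (x - m)^2 + 2 * m * (normal_density m s x * (x - m)^1) + m^2 * (normal_density m s x * (x - m)^0))"
    by (intro Bochner_Integration.integrable_add integrable_mult_right i)
  also have "(\<lambda>x. normal_density m s x * (x - m)^2 + 2 * m * (normal_density m s x * (x - m)^1) + m^2 * (normal_density m s x * (x - m)^0)) = (\<lambda>x. normal_density m s x * x\<^sup>2)"
    by (rule ext) (simp add: power2_eq_square algebra_simps)
  finally have "integrable (density lborel (normal_density m s)) (\<lambda>x. x\<^sup>2)"
    by (subst integrable_density) (auto simp: normal_density_nonneg)
  then show ?thesis using s
    by (simp add: P2_def gaussian_def prob_space_normal_density)
qed

lemma gaussian_affine:
  assumes s: "s > 0"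
  shows "gaussian m s = distr (gaussian 0 1) borel (\<lambda>x. m + s * x)"
proof -
  interpret prob_space "gaussian 0 1" by (rule prob_space_gaussian01)
  have "distributed (gaussian 0 1) lborel (\<lambda>x. x) (normal_density 0 1)"
    by (simp add: distributed_def gaussian_def distr_id2 cong: distr_cong)
  from normal_density_affine[OF this, of s m] s
  have "distributed (gaussian 0 1) lborel (\<lambda>x. m + s * x) (normal_density m s)" by simp
  then have "distr (gaussian 0 1) lborel (\<lambda>x. m + s * x) = gaussian m s"
    using s by (simp add: distributed_def gaussian_def)
  moreover have "distr (gaussian 0 1) lborel (\<lambda>x. m + s * x) = distr (gaussian 0 1) borel (\<lambda>x. m + s * x)"
    by (rule distr_cong) auto
  ultimately show ?thesis by simp
qed

definition zq :: "real \<Rightarrow> real" where "zq = quantile (gaussian 0 1)"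

lemma quantile_gaussian:
  assumes "s \<ge> 0" "0 < u" "u < 1"
  shows "quantile (gaussian m s) u = m + s * zq u"
proof (cases "s = 0")
  case True
  show ?thesis
  proof (rule quantile_eqI[OF P2_gaussian[OF assms(1)] assms(2,3)])
    fix x show "u \<le> measure (gaussian m s) {..x} \<longleftrightarrow> m + s * zq u \<le> x"
      using True assms by (simp add: gaussian_def measure_return split: split_indicator)
  qed
next
  case False
  then have s: "s > 0" using assms by simp
  have P01: "P2 (gaussian 0 1)" using P2_gaussian[of 1 0] by simp
  then have sp: "space (gaussian 0 1) = UNIV" "sets (gaussian 0 1) = sets borel"
    by (auto simp: P2_def gaussian_def)
  show ?thesis
  proof (rule quantile_eqI[OF P2_gaussian[OF assms(1)] assms(2,3)])
    fix x
    have "measure (gaussian m s) {..x} = measure (gaussian 0 1) ((\<lambda>y. m + s * y) -` {..x} \<inter> space (gaussian 0 1))"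
      unfolding gaussian_affine[OF s] by (rule measure_distr) (auto simp: sp measurable_cong_sets[OF sp(2) refl])
    also have "(\<lambda>y. m + s * y) -` {..x} \<inter> space (gaussian 0 1) = {..(x - m) / s}"
      using s by (auto simp: sp field_simps)
    finally have "u \<le> measure (gaussian m s) {..x} \<longleftrightarrow> zq u \<le> (x - m) / s"
      using quantile_galois[OF P01 assms(2,3)] by (simp add: zq_def)
    also have "\<dots> \<longleftrightarrow> m + s * zq u \<le> x" using s by (simp add: field_simps)
    finally show "u \<le> measure (gaussian m s) {..x} \<longleftrightarrow> m + s * zq u \<le> x" .
  qed
qed

lemma P2_g01: "P2 (gaussian 0 1)" using P2_gaussian[of 1 0] by simp

lemma zq_mono: "mono_on {0<..<1} zq"
  unfolding zq_def by (rule quantile_mono[OF P2_g01])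

definition zz :: "real \<Rightarrow> real" where "zz u = (if u \<in> {0<..<1} then zq u else 0)"

lemma zq_meas: "zq \<in> borel_measurable (restrict_space borel {0<..<1})"
  by (rule borel_measurable_mono_on_fnc[OF zq_mono])

lemma zq_meas': "zq \<in> measurable (restrict_space lborel {0<..<1}) borel"
  using zq_meas by (simp add: measurable_cong_sets[OF sets_restrict_space_cong[OF sets_lborel] refl])

lemma zz_meas[measurable]: "zz \<in> borel_measurable borel"
proof -
  have "(\<lambda>x. if x \<in> {0<..<1} then zq x else 0) \<in> borel_measurable borel"
    using zq_meas by (subst measurable_restrict_space_iff[symmetric]) auto
  then show ?thesis unfolding zz_def .
qed

lemma distr_zq: "distr (restrict_space lborel {0<..<1}) borel zq = gaussian 0 1"
proof -
  interpret cdf_distribution "gaussian 0 1" by (rule P2_cdf_distribution[OF P2_g01])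
  show ?thesis using distr_I_eq_M unfolding zq_def quantile_def cdf_def .
qed

lemma gaussian01_density: "gaussian 0 1 = density lborel std_normal_density"
  by (simp add: gaussian_def)

lemma zq_integral:
  fixes g :: "real \<Rightarrow> real"
  assumes g[measurable]: "g \<in> borel_measurable borel"
  shows "integrable lborel (\<lambda>u. indicator {0<..<1} u * g (zz u)) \<longleftrightarrow> integrable lborel (\<lambda>x. std_normal_density x * g x)"
    and "integral\<^sup>L lborel (\<lambda>u. indicator {0<..<1} u * g (zz u)) = integral\<^sup>L lborel (\<lambda>x. std_normal_density x * g x)"
proof -
  let ?R = "restrict_space lborel {0<..<1::real}"
  have sp: "{0<..<1::real} \<inter> space lborel \<in> sets lborel" by simp
  have cong1: "integrable ?R (\<lambda>u. g (zz u)) \<longleftrightarrow> integrable ?R (\<lambda>u. g (zq u))"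
    by (rule Bochner_Integration.integrable_cong) (auto simp: zz_def space_restrict_space)
  have cong2: "integral\<^sup>L ?R (\<lambda>u. g (zz u)) = integral\<^sup>L ?R (\<lambda>u. g (zq u))"
    by (rule Bochner_Integration.integral_cong) (auto simp: zz_def space_restrict_space)
  have "integrable lborel (\<lambda>u. indicator {0<..<1} u * g (zz u)) \<longleftrightarrow> integrable ?R (\<lambda>u. g (zz u))"
    using integrable_restrict_space[OF sp, of "\<lambda>u. g (zz u)"] by simp
  also have "\<dots> \<longleftrightarrow> integrable (distr ?R borel zq) g"
    using cong1 integrable_distr_eq[OF zq_meas' g] by simp
  also have "\<dots> \<longleftrightarrow> integrable lborel (\<lambda>x. std_normal_density x * g x)"
    unfolding distr_zq gaussian01_density
    by (subst integrable_density) (auto simp: measurable_cong_sets[OF sets_lborel refl])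
  finally show "integrable lborel (\<lambda>u. indicator {0<..<1} u * g (zz u)) \<longleftrightarrow> integrable lborel (\<lambda>x. std_normal_density x * g x)" .
  have "integral\<^sup>L lborel (\<lambda>u. indicator {0<..<1} u * g (zz u)) = integral\<^sup>L ?R (\<lambda>u. g (zz u))"
    using integral_restrict_space[OF sp, of "\<lambda>u. g (zz u)"] by simp
  also have "\<dots> = integral\<^sup>L (distr ?R borel zq) g"
    using cong2 integral_distr[OF zq_meas' g] by simp
  also have "\<dots> = integral\<^sup>L lborel (\<lambda>x. std_normal_density x * g x)"
    unfolding distr_zq gaussian01_density
    by (subst integral_density) (auto simp: measurable_cong_sets[OF sets_lborel refl])
  finally show "integral\<^sup>L lborel (\<lambda>u. indicator {0<..<1} u * g (zz u)) = integral\<^sup>L lborel (\<lambda>x. std_normal_density x * g x)" .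
qed

lemma zq_nn_integral:
  fixes g :: "real \<Rightarrow> real"
  assumes g[measurable]: "g \<in> borel_measurable borel"
  shows "(\<integral>\<^sup>+u. ennreal (g (zq u)) \<partial>lebesgue_on {0<..<1}) = (\<integral>\<^sup>+x. ennreal (std_normal_density x) * ennreal (g x) \<partial>lborel)"
proof -
  let ?R = "restrict_space lborel {0<..<1::real}"
  have "(\<integral>\<^sup>+u. ennreal (g (zq u)) \<partial>lebesgue_on {0<..<1}) = (\<integral>\<^sup>+u. ennreal (g (zz u)) \<partial>lebesgue_on {0<..<1})"
    by (rule nn_integral_cong) (auto simp: zz_def space_restrict_space)
  also have "\<dots> = (\<integral>\<^sup>+u. ennreal (g (zz u)) * indicator {0<..<1} u \<partial>lebesgue)"
    by (rule nn_integral_restrict_space) simp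
  also have "\<dots> = (\<integral>\<^sup>+u. ennreal (g (zz u)) * indicator {0<..<1} u \<partial>lborel)"
    by (rule nn_integral_completion)
  also have "\<dots> = (\<integral>\<^sup>+u. ennreal (g (zz u)) \<partial>?R)"
    by (rule nn_integral_restrict_space[symmetric]) simp
  also have "\<dots> = (\<integral>\<^sup>+u. ennreal (g (zq u)) \<partial>?R)"
    by (rule nn_integral_cong) (auto simp: zz_def space_restrict_space)
  also have "\<dots> = (\<integral>\<^sup>+x. ennreal (g x) \<partial>distr ?R borel zq)"
    by (rule nn_integral_distr[symmetric]) (auto simp: zq_meas')
  also have "\<dots> = (\<integral>\<^sup>+x. ennreal (std_normal_density x) * ennreal (g x) \<partial>lborel)"
    unfolding distr_zq gaussian01_density
    by (subst nn_integral_density) (auto simp: measurable_cong_sets[OF sets_lborel refl])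
  finally show ?thesis .
qed

lemma riemann_cells:
  fixes f :: "real \<Rightarrow> real"
  assumes h: "h > 0" and int: "f integrable_on {a..a + real n * h}"
    and tag: "\<And>k. k < n \<Longrightarrow> u k \<in> {a + real k * h .. a + real (Suc k) * h}"
    and D: "\<And>k x. k < n \<Longrightarrow> x \<in> {a + real k * h .. a + real (Suc k) * h} \<Longrightarrow> \<bar>f (u k) - f x\<bar> \<le> D k"
  shows "\<bar>h * (\<Sum>k<n. f (u k)) - integral {a..a + real n * h} f\<bar> \<le> h * (\<Sum>k<n. D k)"
  using int tag D
proof (induction n)
  case 0
  then show ?case by simp
next
  case (Suc n)
  let ?l = "a + real n * h" and ?r = "a + real (Suc n) * h"
  have lr: "a \<le> ?l" "?l \<le> ?r" using h by auto
  have intn: "f integrable_on {a..?l}"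
    by (rule integrable_on_subinterval[OF Suc.prems(1)]) (use h in auto)
  have intc: "f integrable_on {?l..?r}"
    by (rule integrable_on_subinterval[OF Suc.prems(1)]) (use h in auto)
  have IH: "\<bar>h * (\<Sum>k<n. f (u k)) - integral {a..?l} f\<bar> \<le> h * (\<Sum>k<n. D k)"
    by (rule Suc.IH[OF intn]) (use Suc.prems in auto)
  have comb: "integral {a..?l} f + integral {?l..?r} f = integral {a..?r} f"
    by (rule Henstock_Kurzweil_Integration.integral_combine[OF lr Suc.prems(1)])
  have Dn: "\<And>x. x \<in> {?l..?r} \<Longrightarrow> \<bar>f (u n) - f x\<bar> \<le> D n" using Suc.prems(3)[of n] by auto
  have up: "integral {?l..?r} f \<le> integral {?l..?r} (\<lambda>x. f (u n) + D n)"
    by (rule integral_le[OF intc]) (use Dn in \<open>force simp: abs_le_iff\<close>)+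
  have lo: "integral {?l..?r} (\<lambda>x. f (u n) - D n) \<le> integral {?l..?r} f"
    by (rule integral_le[OF _ intc]) (use Dn in \<open>force simp: abs_le_iff\<close>)+
  have c1: "\<bar>h * f (u n) - integral {?l..?r} f\<bar> \<le> h * D n"
    using up lo h by (simp add: abs_le_iff algebra_simps)
  show ?case
    using IH c1 comb[symmetric] by (simp add: algebra_simps abs_le_iff)
qed

lemma riemann_mono:
  fixes f g :: "real \<Rightarrow> real"
  assumes h: "h > 0" and int: "f integrable_on {a..a + real n * h}"
    and g: "mono_on {a..a + real n * h} g"
    and tag: "\<And>k. k < n \<Longrightarrow> u k \<in> {a + real k * h .. a + real (Suc k) * h}"
    and L0: "L \<ge> 0" and L: "\<And>x y. x \<in> {a..a + real n * h} \<Longrightarrow> y \<in> {a..a + real n * h} \<Longrightarrow> \<bar>f x - f y\<bar> \<le> L * \<bar>g x - g y\<bar>"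
  shows "\<bar>h * (\<Sum>k<n. f (u k)) - integral {a..a + real n * h} f\<bar> \<le> h * (L * (g (a + real n * h) - g a))"
proof -
  let ?c = "\<lambda>k. a + real k * h"
  have sub: "k < n \<Longrightarrow> {?c k..?c (Suc k)} \<subseteq> {a..a + real n * h}" for k
    using h by (auto intro: order_trans[OF _ mult_right_mono[of "real (Suc k)" "real n" h]])
  have "\<bar>h * (\<Sum>k<n. f (u k)) - integral {a..a + real n * h} f\<bar> \<le> h * (\<Sum>k<n. L * (g (?c (Suc k)) - g (?c k)))"
  proof (rule riemann_cells[OF h int tag])
    fix k x assume k: "k < n" and x: "x \<in> {?c k..?c (Suc k)}"
    have uk: "u k \<in> {?c k..?c (Suc k)}" using tag k by auto
    have m: "\<bar>g (u k) - g x\<bar> \<le> g (?c (Suc k)) - g (?c k)"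
    proof -
      have ins: "?c k \<in> {a..a + real n * h}" "?c (Suc k) \<in> {a..a + real n * h}" "u k \<in> {a..a + real n * h}" "x \<in> {a..a + real n * h}"
      proof -
        show "?c k \<in> {a..a + real n * h}" by (rule subsetD[OF sub[OF k]]) (use h in auto)
        show "?c (Suc k) \<in> {a..a + real n * h}" by (rule subsetD[OF sub[OF k]]) (use h in auto)
        show "u k \<in> {a..a + real n * h}" by (rule subsetD[OF sub[OF k] uk])
        show "x \<in> {a..a + real n * h}" by (rule subsetD[OF sub[OF k] x])
      qed
      have "g (?c k) \<le> g (u k)" "g (u k) \<le> g (?c (Suc k))" "g (?c k) \<le> g x" "g x \<le> g (?c (Suc k))"
        using uk x ins by (auto intro!: mono_onD[OF g])
      then show ?thesis by linarith
    qed
    have "\<bar>f (u k) - f x\<bar> \<le> L * \<bar>g (u k) - g x\<bar>" using L sub[OF k] uk x by auto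
    also have "\<dots> \<le> L * (g (?c (Suc k)) - g (?c k))" using m L0 by (rule mult_left_mono)
    finally show "\<bar>f (u k) - f x\<bar> \<le> L * (g (?c (Suc k)) - g (?c k))" .
  qed
  also have "(\<Sum>k<n. L * (g (?c (Suc k)) - g (?c k))) = L * (g (?c n) - g (?c 0))"
  proof -
    have "(\<Sum>k<n. g (?c (Suc k)) - g (?c k)) = g (?c n) - g (?c 0)"
      by (rule sum_lessThan_telescope)
    then show ?thesis by (simp add: sum_distrib_left[symmetric])
  qed
  finally show ?thesis by simp
qed

lemma zq_mono_ab: "0 < a \<Longrightarrow> b < 1 \<Longrightarrow> mono_on {a..b} zq"
  by (rule mono_on_subset[OF zq_mono]) auto

lemma zq_int_on: "0 < a \<Longrightarrow> b < 1 \<Longrightarrow> zq integrable_on {a..b}"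
  by (rule integrable_on_mono_on[OF zq_mono_ab])

lemma zq2_int_on:
  assumes "0 < a" "b < 1" shows "(\<lambda>x. (zq x)^2) integrable_on {a..b}"
proof -
  have m: "mono_on {a..b} zq" by (rule zq_mono_ab[OF assms])
  have p: "mono_on {a..b} (\<lambda>x. (max (zq x) 0)^2)"
    unfolding mono_on_def
  proof (intro allI impI)
    fix r s assume "r \<in> {a..b} \<and> s \<in> {a..b} \<and> r \<le> s"
    then have "zq r \<le> zq s" using m by (auto intro: mono_onD)
    then show "(max (zq r) 0)^2 \<le> (max (zq s) 0)^2" by (intro power_mono) auto
  qed
  have q: "mono_on {a..b} (\<lambda>x. - ((min (zq x) 0)^2))"
    unfolding mono_on_def
  proof (intro allI impI)
    fix r s assume "r \<in> {a..b} \<and> s \<in> {a..b} \<and> r \<le> s"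
    then have "zq r \<le> zq s" using m by (auto intro: mono_onD)
    then have "(- min (zq s) 0)^2 \<le> (- min (zq r) 0)^2" by (intro power_mono) auto
    then show "- ((min (zq r) 0)^2) \<le> - ((min (zq s) 0)^2)" by simp
  qed
  have "(\<lambda>x. (max (zq x) 0)^2 - (- ((min (zq x) 0)^2))) integrable_on {a..b}"
    by (intro integrable_diff integrable_on_mono_on p q)
  also have "(\<lambda>x. (max (zq x) 0)^2 - (- ((min (zq x) 0)^2))) = (\<lambda>x. (zq x)^2)"
    by (rule ext) (auto simp: max_def min_def)
  finally show ?thesis .
qed

lemma zq_riemann:
  fixes a h :: real and n :: nat
  defines "b \<equiv> a + real n * h"
  assumes a: "0 < a" and b: "b < 1" and h: "h > 0"
    and tag: "\<And>k. k < n \<Longrightarrow> u k \<in> {a + real k * h .. a + real (Suc k) * h}"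
  shows "\<bar>h * (\<Sum>k<n. zq (u k)) - integral {a..b} zq\<bar> \<le> h * (zq b - zq a)"
    and "\<bar>h * (\<Sum>k<n. (zq (u k))^2) - integral {a..b} (\<lambda>x. (zq x)^2)\<bar>
           \<le> h * ((2 * max \<bar>zq a\<bar> \<bar>zq b\<bar>) * (zq b - zq a))"
proof -
  have m: "mono_on {a..b} zq" using zq_mono_ab[OF a b] .
  show "\<bar>h * (\<Sum>k<n. zq (u k)) - integral {a..b} zq\<bar> \<le> h * (zq b - zq a)"
    using riemann_mono[OF h, where f=zq and a=a and n=n and g=zq and L=1 and u=u] zq_int_on[OF a b] m tag unfolding b_def by auto
  let ?M = "max \<bar>zq a\<bar> \<bar>zq b\<bar>"
  have bnd: "x \<in> {a..b} \<Longrightarrow> \<bar>zq x\<bar> \<le> ?M" for x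
  proof -
    assume x: "x \<in> {a..b}"
    then have "zq a \<le> zq x" "zq x \<le> zq b" using m by (auto intro!: mono_onD[OF m])
    then show ?thesis by linarith
  qed
  have L: "\<bar>(zq x)^2 - (zq y)^2\<bar> \<le> (2 * ?M) * \<bar>zq x - zq y\<bar>" if "x \<in> {a..b}" "y \<in> {a..b}" for x y
  proof -
    have "\<bar>(zq x)^2 - (zq y)^2\<bar> = \<bar>zq x + zq y\<bar> * \<bar>zq x - zq y\<bar>"
      by (simp add: power2_eq_square abs_mult[symmetric] algebra_simps)
    also have "\<dots> \<le> (2 * ?M) * \<bar>zq x - zq y\<bar>"
      using bnd[OF that(1)] bnd[OF that(2)] abs_triangle_ineq[of "zq x" "zq y"]
      by (intro mult_right_mono) (linarith, simp)
    finally show ?thesis .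
  qed
  show "\<bar>h * (\<Sum>k<n. (zq (u k))^2) - integral {a..b} (\<lambda>x. (zq x)^2)\<bar>
           \<le> h * ((2 * ?M) * (zq b - zq a))"
    using riemann_mono[OF h, where f="\<lambda>x. (zq x)^2" and a=a and n=n and g=zq and L="2 * ?M" and u=u] zq2_int_on[OF a b] m tag L
    unfolding b_def by auto
qed

lemma zq_tail_lim:
  fixes k :: nat
  shows "(\<lambda>j. integral {1/(real j+3)..1 - 1/(real j+3)} (\<lambda>x. (zq x)^k))
           \<longlonglongrightarrow> integral\<^sup>L lborel (\<lambda>x. std_normal_density x * x^k)"
proof -
  define S where "S j = {1/(real j+3)..1 - 1/(real j+3)}" for j :: nat
  define F where "F x = indicator {0<..<1} x * (zz x)^k" for x
  have Fi: "integrable lborel F"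
    unfolding F_def using zq_integral(1)[of "\<lambda>x. x^k"] integrable_std_normal_moment[of k] by simp
  have Fv: "integral\<^sup>L lborel F = integral\<^sup>L lborel (\<lambda>x. std_normal_density x * x^k)"
    unfolding F_def using zq_integral(2)[of "\<lambda>x. x^k"] by simp
  have Ssub: "S j \<subseteq> {0<..<1}" for j
  proof -
    have p: "0 < 1/(real j+3)" by simp
    show ?thesis
    proof (rule subsetI)
      fix x assume "x \<in> S j"
      then have "1/(real j+3) \<le> x" "x \<le> 1 - 1/(real j+3)" by (auto simp: S_def)
      then have "0 < x" "x < 1" using p by linarith+
      then show "x \<in> {0<..<1}" by simp
    qed
  qed
  have eq: "integral\<^sup>L lborel (\<lambda>x. indicator (S j) x * F x) = integral (S j) (\<lambda>x. (zq x)^k)" for j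
  proof -
    have si: "set_integrable lborel (S j) (\<lambda>x. (zq x)^k)"
    proof -
      have "integrable lborel (\<lambda>x. indicator (S j) x *\<^sub>R F x)"
        by (rule integrable_mult_indicator[OF _ Fi]) (simp add: S_def)
      moreover have "(\<lambda>x. indicator (S j) x *\<^sub>R F x) = (\<lambda>x. indicator (S j) x *\<^sub>R (zq x)^k)"
        using Ssub[of j] by (auto simp: F_def zz_def indicator_def fun_eq_iff)
      ultimately show ?thesis by (simp add: set_integrable_def)
    qed
    have "integral\<^sup>L lborel (\<lambda>x. indicator (S j) x * F x) = (LINT x:S j|lborel. (zq x)^k)"
      unfolding set_lebesgue_integral_def
      by (rule Bochner_Integration.integral_cong) (use Ssub[of j] in \<open>auto simp: F_def zz_def indicator_def\<close>)
    also have "\<dots> = integral (S j) (\<lambda>x. (zq x)^k)"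
      by (rule set_borel_integral_eq_integral(2)[OF si])
    finally show ?thesis .
  qed
  have lim: "(\<lambda>j. integral\<^sup>L lborel (\<lambda>x. indicator (S j) x * F x)) \<longlonglongrightarrow> integral\<^sup>L lborel F"
  proof (rule integral_dominated_convergence[where w="\<lambda>x. \<bar>F x\<bar>"])
    show "F \<in> borel_measurable lborel" using Fi by auto
    show "(\<lambda>x. indicator (S j) x * F x) \<in> borel_measurable lborel" for j
      using Fi by (auto simp: S_def)
    show "integrable lborel (\<lambda>x. \<bar>F x\<bar>)" using Fi by auto
    show "AE x in lborel. norm (indicator (S j) x * F x) \<le> \<bar>F x\<bar>" for j
      by (auto simp: indicator_def)
    show "AE x in lborel. (\<lambda>j. indicator (S j) x * F x) \<longlonglongrightarrow> F x"
    proof (rule AE_I2)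
      fix x :: real
      show "(\<lambda>j. indicator (S j) x * F x) \<longlonglongrightarrow> F x"
      proof (cases "x \<in> {0<..<1}")
        case True
        have t: "(\<lambda>j. 1 / (real j + 3)) \<longlonglongrightarrow> 0"
          by real_asymp
        have "min x (1 - x) > 0" using True by auto
        from order_tendstoD(2)[OF t this] have "eventually (\<lambda>j. 1 / (real j + 3) < min x (1 - x)) sequentially" .
        then have "eventually (\<lambda>j. indicator (S j) x * F x = F x) sequentially"
          by eventually_elim (auto simp: S_def)
        then show ?thesis by (rule tendsto_eventually)
      next
        case False
        then have "F x = 0" by (simp add: F_def)
        then show ?thesis by simp
      qed
    qed
  qed
  show ?thesis using lim unfolding eq Fv by (simp add: S_def)
qed

lemma grid:
  fixes \<eta> :: real
  assumes eta: "0 < \<eta>"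
  shows "\<exists>a n. 0 < a \<and> a \<le> \<eta> \<and> 0 < n \<and> 2 * a < 1 \<and>
    (\<forall>u. (\<forall>k<n. u k \<in> {a + real k * ((1 - 2*a) / real n) .. a + real (Suc k) * ((1 - 2*a) / real n)}) \<longrightarrow>
       \<bar>((1 - 2*a) / real n) * (\<Sum>k<n. zq (u k))\<bar> \<le> \<eta> \<and>
       \<bar>((1 - 2*a) / real n) * (\<Sum>k<n. (zq (u k))^2) - 1\<bar> \<le> \<eta>)"
proof -
  define I1 where "I1 j = integral {1/(real j+3)..1 - 1/(real j+3)} (\<lambda>x. (zq x)^1)" for j :: nat
  define I2 where "I2 j = integral {1/(real j+3)..1 - 1/(real j+3)} (\<lambda>x. (zq x)^2)" for j :: nat
  have l1: "I1 \<longlonglongrightarrow> 0"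
    unfolding I1_def using zq_tail_lim[of 1] integral_std_normal_moment_odd[of 0] by simp
  have l2: "I2 \<longlonglongrightarrow> 1"
    unfolding I2_def using zq_tail_lim[of 2] integral_std_normal_moment_even[of 1] by simp
  have e1: "eventually (\<lambda>j. \<bar>I1 j\<bar> < \<eta>/2) sequentially"
    using tendstoD[OF l1, of "\<eta>/2"] eta by (simp add: dist_real_def)
  have e2: "eventually (\<lambda>j. \<bar>I2 j - 1\<bar> < \<eta>/2) sequentially"
    using tendstoD[OF l2, of "\<eta>/2"] eta by (simp add: dist_real_def)
  have t: "(\<lambda>j. 1 / (real j + 3)) \<longlonglongrightarrow> 0" by real_asymp
  have e3: "eventually (\<lambda>j. 1 / (real j + 3) < \<eta>) sequentially"
    using order_tendstoD(2)[OF t eta] .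
  obtain j where j: "\<bar>I1 j\<bar> < \<eta>/2" "\<bar>I2 j - 1\<bar> < \<eta>/2" "1 / (real j + 3) < \<eta>"
    using eventually_happens'[OF _ eventually_conj[OF e1 eventually_conj[OF e2 e3]]] by auto
  define a where "a = 1 / (real j + 3)"
  define b where "b = 1 - a"
  have a0: "0 < a" and a3: "a \<le> 1/3" unfolding a_def by (auto simp: field_simps)
  have b1: "b < 1" and ab: "a < b" using a0 a3 by (auto simp: b_def)
  have mab: "zq a \<le> zq b" using zq_mono_ab[OF a0 b1] ab by (auto intro: mono_onD)
  define M where "M = max \<bar>zq a\<bar> \<bar>zq b\<bar>"
  define C where "C = (zq b - zq a) * (1 + 2 * M)"
  have C0: "C \<ge> 0" unfolding C_def M_def using mab by (intro mult_nonneg_nonneg) auto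
  define n where "n = nat \<lceil>(1 - 2*a) * C / (\<eta>/2)\<rceil> + 1"
  have n0: "0 < n" unfolding n_def by simp
  have nge: "(1 - 2*a) * C / (\<eta>/2) \<le> real n" unfolding n_def by linarith
  define h where "h = (1 - 2*a) / real n"
  have h0: "h > 0" unfolding h_def using a3 n0 by auto
  have hC: "h * C \<le> \<eta>/2"
  proof -
    have "(1 - 2*a) * C \<le> real n * (\<eta>/2)" using nge eta by (simp add: field_simps)
    then show ?thesis unfolding h_def using n0 by (simp add: field_simps)
  qed
  have bn: "a + real n * h = b" unfolding h_def b_def using n0 by simp
  show ?thesis
  proof (intro exI conjI allI impI)
    show "0 < a" "a \<le> \<eta>" "0 < n" "2 * a < 1" using a0 a3 j(3) n0 by (auto simp: a_def)
    fix u assume tag0: "\<forall>k<n. u k \<in> {a + real k * ((1 - 2*a) / real n) .. a + real (Suc k) * ((1 - 2*a) / real n)}"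
    then have tag: "\<And>k. k < n \<Longrightarrow> u k \<in> {a + real k * h .. a + real (Suc k) * h}"
      unfolding h_def by auto
    have an1: "a + real n * h < 1" using bn b1 by simp
    note R = zq_riemann[where a=a and n=n and h=h and u=u, OF a0 an1 h0 tag, unfolded bn]
    have i1: "I1 j = integral {a..b} zq" unfolding I1_def a_def b_def by simp
    have i2: "I2 j = integral {a..b} (\<lambda>x. (zq x)^2)" unfolding I2_def a_def b_def by simp
    have r1: "h * (zq b - zq a) \<le> \<eta>/2"
    proof -
      have M0: "M \<ge> 0" unfolding M_def by auto
      have "zq b - zq a \<le> C" unfolding C_def using mab M0
        by (simp add: algebra_simps mult_left_mono)
      then have "h * (zq b - zq a) \<le> h * C" using h0 by (intro mult_left_mono) auto
      then show ?thesis using hC by linarith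
    qed
    have r2: "h * ((2 * M) * (zq b - zq a)) \<le> \<eta>/2"
    proof -
      have "h * ((2 * M) * (zq b - zq a)) \<le> h * C"
        using h0 mab unfolding C_def by (intro mult_left_mono) (auto simp: algebra_simps)
      then show ?thesis using hC by linarith
    qed
    show "\<bar>((1 - 2*a) / real n) * (\<Sum>k<n. zq (u k))\<bar> \<le> \<eta>"
      using R(1) r1 j(1) i1 unfolding h_def by linarith
    show "\<bar>((1 - 2*a) / real n) * (\<Sum>k<n. (zq (u k))^2) - 1\<bar> \<le> \<eta>"
      using R(2) r2 j(2) i2 unfolding h_def M_def by linarith
  qed
qed

lemma quantile_meas:
  assumes "P2 \<mu>"
  shows "(\<lambda>u. indicator {0<..<1} u * quantile \<mu> u) \<in> borel_measurable lborel"
proof -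
  have "quantile \<mu> \<in> borel_measurable (restrict_space borel {0<..<1})"
    by (rule borel_measurable_mono_on_fnc[OF quantile_mono[OF assms]])
  then have "(\<lambda>x. if x \<in> {0<..<1} then quantile \<mu> x else 0) \<in> borel_measurable borel"
    by (subst measurable_restrict_space_iff[symmetric]) auto
  also have "(\<lambda>x. if x \<in> {0<..<1} then quantile \<mu> x else 0) = (\<lambda>u. indicator {0<..<1} u * quantile \<mu> u)"
    by (auto simp: indicator_def fun_eq_iff)
  finally show ?thesis by (simp add: measurable_cong_sets[OF sets_lborel refl])
qed

definition Qa :: "(real \<Rightarrow> real measure) \<Rightarrow> nat \<Rightarrow> real \<Rightarrow> real \<Rightarrow> real" where
  "Qa \<nu> j t u = (\<Sum>i<Suc j. indicator {real i / real (Suc j)..<real (Suc i) / real (Suc j)} t *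
                      (indicator {0<..<1} u * quantile (\<nu> (real i / real (Suc j))) u))"

definition Qm :: "(real \<Rightarrow> real measure) \<Rightarrow> real \<Rightarrow> real \<Rightarrow> real" where
  "Qm \<nu> t u = lim (\<lambda>j. Qa \<nu> j t u)"

definition dq :: "(real \<Rightarrow> real \<Rightarrow> real) \<Rightarrow> real \<Rightarrow> real \<Rightarrow> real" where
  "dq F t u = lim (\<lambda>n. (F (t + 1 / real (Suc n)) u - F t u) * real (Suc n))"

lemma meas_Qa:
  assumes "\<forall>t\<in>{0..1}. P2 (\<nu> t)"
  shows "(\<lambda>x. Qa \<nu> j (fst x) (snd x)) \<in> borel_measurable (lborel \<Otimes>\<^sub>M lborel)"
proof -
  have m: "(\<lambda>u. indicator {0<..<1} u * quantile (\<nu> (real i / real (Suc j))) u) \<in> borel_measurable lborel" if "i < Suc j" for i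
  proof (rule quantile_meas)
    have "real i / real (Suc j) \<in> {0..1}" using that by (auto simp: field_simps)
    then show "P2 (\<nu> (real i / real (Suc j)))" using assms by auto
  qed
  show ?thesis unfolding Qa_def
    by (intro borel_measurable_sum borel_measurable_times measurable_compose[OF measurable_snd m]
        measurable_compose[OF measurable_fst]) auto
qed

lemma meas_Qm:
  assumes "\<forall>t\<in>{0..1}. P2 (\<nu> t)"
  shows "(\<lambda>x. Qm \<nu> (fst x) (snd x)) \<in> borel_measurable (lborel \<Otimes>\<^sub>M lborel)"
  unfolding Qm_def by (rule borel_measurable_lim_metric) (rule meas_Qa[OF assms])

lemma meas_dq:
  assumes "(\<lambda>x. F (fst x) (snd x)) \<in> borel_measurable (lborel \<Otimes>\<^sub>M lborel)"
  shows "(\<lambda>x. dq F (fst x) (snd x)) \<in> borel_measurable (lborel \<Otimes>\<^sub>M lborel)"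
proof -
  have sh: "(\<lambda>x. F (fst x + c) (snd x)) \<in> borel_measurable (lborel \<Otimes>\<^sub>M lborel)" for c
  proof -
    have "(\<lambda>x::real\<times>real. (fst x + c, snd x)) \<in> measurable (lborel \<Otimes>\<^sub>M lborel) (lborel \<Otimes>\<^sub>M lborel)"
      by (intro measurable_Pair) auto
    from measurable_compose[OF this assms] show ?thesis by simp
  qed
  show ?thesis unfolding dq_def
    by (intro borel_measurable_lim_metric borel_measurable_times borel_measurable_diff sh assms) auto
qed

lemma deriv_seq:
  fixes f :: "real \<Rightarrow> real"
  assumes "(f has_real_derivative D) (at t within {0..1})" "0 \<le> t" "t < 1"
  shows "(\<lambda>n. (f (t + 1 / real (Suc n)) - f t) * real (Suc n)) \<longlonglongrightarrow> D"
proof -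
  have q: "((\<lambda>y. (f y - f t) / (y - t)) \<longlongrightarrow> D) (at t within {0..1})"
    using assms(1) by (simp add: has_field_derivative_iff)
  have s: "(\<lambda>n. t + 1 / real (Suc n)) \<longlonglongrightarrow> t"
    using tendsto_add[OF tendsto_const[of t] LIMSEQ_inverse_real_of_nat] by (simp add: inverse_eq_divide)
  have ev: "eventually (\<lambda>n. 1 / real (Suc n) < 1 - t) sequentially"
    using order_tendstoD(2)[OF LIMSEQ_inverse_real_of_nat[unfolded inverse_eq_divide], of "1 - t"] assms(3) by simp
  have "filterlim (\<lambda>n. t + 1 / real (Suc n)) (at t within {0..1}) sequentially"
    unfolding filterlim_at
  proof
    show "\<forall>\<^sub>F n in sequentially. t + 1 / real (Suc n) \<in> {0..1} \<and> t + 1 / real (Suc n) \<noteq> t"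
      using ev by eventually_elim (use assms in auto)
  qed (rule s)
  from filterlim_compose[OF q this]
  have "(\<lambda>n. (f (t + 1 / real (Suc n)) - f t) / (t + 1 / real (Suc n) - t)) \<longlonglongrightarrow> D" .
  then show ?thesis by simp
qed

lemma dq_eq:
  fixes f :: "real \<Rightarrow> real"
  assumes "\<And>s. s \<in> {0..<1} \<Longrightarrow> F s u = f s"
    and "(f has_real_derivative D) (at t within {0..1})" "0 \<le> t" "t < 1"
  shows "dq F t u = D"
proof -
  have ev: "eventually (\<lambda>n. 1 / real (Suc n) < 1 - t) sequentially"
    using order_tendstoD(2)[OF LIMSEQ_inverse_real_of_nat[unfolded inverse_eq_divide], of "1 - t"] assms(4) by simp
  have "eventually (\<lambda>n. (f (t + 1 / real (Suc n)) - f t) * real (Suc n) = (F (t + 1 / real (Suc n)) u - F t u) * real (Suc n)) sequentially"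
    using ev by eventually_elim (use assms in \<open>auto intro!: arg_cong2[where f="(-)"] simp: assms(1)\<close>)
  from tendsto_cong[OF this] deriv_seq[OF assms(2-4)]
  have "(\<lambda>n. (F (t + 1 / real (Suc n)) u - F t u) * real (Suc n)) \<longlonglongrightarrow> D" by simp
  then show ?thesis unfolding dq_def by (rule limI)
qed

lemma Qa_eq:
  assumes t: "0 \<le> t" "t < 1" and u: "0 < u" "u < 1"
  shows "Qa \<nu> j t u = quantile (\<nu> (real (nat \<lfloor>real (Suc j) * t\<rfloor>) / real (Suc j))) u"
proof -
  define J where "J = real (Suc j)"
  define i0 where "i0 = nat \<lfloor>J * t\<rfloor>"
  have J0: "J > 0" unfolding J_def by simp
  have fl0: "\<lfloor>J * t\<rfloor> \<ge> 0" using J0 t by simp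
  have ind: "indicator {real i / J..<real (Suc i) / J} t = (if i = i0 then 1 else (0::real))" for i
  proof -
    have "(real i / J \<le> t \<and> t < real (Suc i) / J) \<longleftrightarrow> (real i \<le> J * t \<and> J * t < real i + 1)"
      using J0 by (simp add: field_simps)
    also have "\<dots> \<longleftrightarrow> \<lfloor>J * t\<rfloor> = int i" by (simp add: floor_eq_iff)
    also have "\<dots> \<longleftrightarrow> i = i0" unfolding i0_def using fl0 by auto
    finally show ?thesis by (simp add: indicator_def)
  qed
  have i0J: "i0 < Suc j"
  proof -
    have "J * t < J" using J0 t by simp
    then have "\<lfloor>J * t\<rfloor> < int (Suc j)" unfolding J_def by (simp add: floor_less_iff)
    then show ?thesis unfolding i0_def using fl0 by linarith
  qed
  have "Qa \<nu> j t u = (\<Sum>i<Suc j. (if i = i0 then indicator {0<..<1} u * quantile (\<nu> (real i / J)) u else 0))"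
    unfolding Qa_def J_def[symmetric] by (intro sum.cong refl) (simp only: ind, simp)
  also have "\<dots> = indicator {0<..<1} u * quantile (\<nu> (real i0 / J)) u"
    using i0J by (simp add: sum.delta)
  finally show ?thesis using u by (simp add: i0_def J_def)
qed

lemma adm_cont:
  assumes "admissible_curve \<nu> B" "0 < u" "u < 1"
  shows "continuous_on {0..1} (\<lambda>s. quantile (\<nu> s) u)"
proof -
  obtain V where V: "\<forall>t\<in>{0..1}. ((\<lambda>s. quantile (\<nu> s) u) has_real_derivative V t) (at t within {0..1})"
    using assms unfolding admissible_curve_def by force
  show ?thesis unfolding continuous_on_eq_continuous_within
    using V DERIV_continuous by blast
qed

lemma Qm_eq:
  assumes adm: "admissible_curve \<nu> B" and t: "0 \<le> t" "t < 1" and u: "0 < u" "u < 1"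
  shows "Qm \<nu> t u = quantile (\<nu> t) u"
proof -
  define s where "s j = real (nat \<lfloor>real (Suc j) * t\<rfloor>) / real (Suc j)" for j :: nat
  have sb: "t - 1 / real (Suc j) \<le> s j \<and> s j \<le> t \<and> s j \<in> {0..1}" for j
  proof -
    have J0: "real (Suc j) > 0" by simp
    have fl0: "\<lfloor>real (Suc j) * t\<rfloor> \<ge> 0" using t by simp
    have e: "real (nat \<lfloor>real (Suc j) * t\<rfloor>) = real_of_int \<lfloor>real (Suc j) * t\<rfloor>" using fl0 by simp
    have f1: "real_of_int \<lfloor>real (Suc j) * t\<rfloor> \<le> real (Suc j) * t" by (rule of_int_floor_le)
    have f2: "real (Suc j) * t - 1 < real_of_int \<lfloor>real (Suc j) * t\<rfloor>" by linarith
    have "(real (Suc j) * t - 1) / real (Suc j) \<le> real_of_int \<lfloor>real (Suc j) * t\<rfloor> / real (Suc j)"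
      by (rule divide_right_mono) (use f2 in auto)
    moreover have "(real (Suc j) * t - 1) / real (Suc j) = t - 1 / real (Suc j)"
      using J0 by (simp add: diff_divide_distrib)
    ultimately have "t - 1 / real (Suc j) \<le> s j" unfolding s_def e by simp
    moreover have "real_of_int \<lfloor>real (Suc j) * t\<rfloor> / real (Suc j) \<le> (real (Suc j) * t) / real (Suc j)"
      by (rule divide_right_mono) (use f1 in auto)
    then have "s j \<le> t" unfolding s_def e using J0 by simp
    moreover have "0 \<le> s j" unfolding s_def by simp
    ultimately show ?thesis using t by auto
  qed
  have lim_s: "s \<longlonglongrightarrow> t"
  proof (rule tendsto_sandwich[where f="\<lambda>j. t - 1 / real (Suc j)" and h="\<lambda>j. t"])
    show "\<forall>\<^sub>F j in sequentially. t - 1 / real (Suc j) \<le> s j" using sb by auto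
    show "\<forall>\<^sub>F j in sequentially. s j \<le> t" using sb by auto
    show "(\<lambda>j. t - 1 / real (Suc j)) \<longlonglongrightarrow> t"
      using tendsto_diff[OF tendsto_const[of t] LIMSEQ_inverse_real_of_nat] by (simp add: inverse_eq_divide)
  qed simp
  have "(\<lambda>j. quantile (\<nu> (s j)) u) \<longlonglongrightarrow> quantile (\<nu> t) u"
    by (rule continuous_on_tendsto_compose[OF adm_cont[OF adm u] lim_s]) (use t sb in auto)
  moreover have "Qa \<nu> j t u = quantile (\<nu> (s j)) u" for j
    unfolding s_def by (rule Qa_eq[OF t u])
  ultimately have "(\<lambda>j. Qa \<nu> j t u) \<longlonglongrightarrow> quantile (\<nu> t) u" by simp
  then show ?thesis unfolding Qm_def by (rule limI)
qed

lemma Vm_eq: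
  assumes adm: "admissible_curve \<nu> B" and t: "0 \<le> t" "t < 1" and u: "0 < u" "u < 1"
    and V: "\<forall>t\<in>{0..1}. ((\<lambda>s. quantile (\<nu> s) u) has_real_derivative V t) (at t within {0..1})"
  shows "dq (Qm \<nu>) t u = V t"
  by (rule dq_eq[where f="\<lambda>s. quantile (\<nu> s) u"]) (use Qm_eq[OF adm _ _ u] V t in auto)

lemma Bm_eq:
  assumes adm: "admissible_curve \<nu> B" and t: "0 \<le> t" "t < 1" and u: "0 < u" "u < 1"
  shows "dq (dq (Qm \<nu>)) t u = B t u"
proof -
  obtain V where V: "\<forall>t\<in>{0..1}. ((\<lambda>s. quantile (\<nu> s) u) has_real_derivative V t) (at t within {0..1}) \<and>
        (V has_real_derivative B t u) (at t within {0..1})"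
    using adm u unfolding admissible_curve_def by force
  show ?thesis
    by (rule dq_eq[where f=V]) (use Vm_eq[OF adm _ _ u] V t in auto)
qed

lemma meas_Bm:
  assumes adm: "admissible_curve \<nu> B"
  shows "(\<lambda>x. dq (dq (Qm \<nu>)) (fst x) (snd x)) \<in> borel_measurable (lborel \<Otimes>\<^sub>M lborel)"
  by (intro meas_dq meas_Qm) (use adm in \<open>auto simp: admissible_curve_def\<close>)

definition Bm :: "(real \<Rightarrow> real measure) \<Rightarrow> real \<Rightarrow> real \<Rightarrow> real" where
  "Bm \<nu> = dq (dq (Qm \<nu>))"

definition Gf :: "(real \<Rightarrow> real measure) \<Rightarrow> real \<Rightarrow> ennreal" where
  "Gf \<nu> u = (\<integral>\<^sup>+ t. ennreal ((Bm \<nu> t u)\<^sup>2) * indicator {0..1} t \<partial>lborel)"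

lemma meas_Bm2:
  assumes "admissible_curve \<nu> B"
  shows "(\<lambda>x. Bm \<nu> (fst x) (snd x)) \<in> borel_measurable (lborel \<Otimes>\<^sub>M lborel)"
  unfolding Bm_def by (rule meas_Bm[OF assms])

lemma meas_Bm_t:
  assumes "admissible_curve \<nu> B"
  shows "(\<lambda>t. Bm \<nu> t u) \<in> borel_measurable lborel"
proof -
  have "(\<lambda>x::real\<times>real. (fst x, snd x)) = (\<lambda>x. x)" by auto
  have "(\<lambda>x. (x, u)) \<in> measurable lborel (lborel \<Otimes>\<^sub>M lborel)" by (rule measurable_Pair2') simp
  from measurable_compose[OF this meas_Bm2[OF assms]] show ?thesis by simp
qed

lemma meas_Bm_u:
  assumes "admissible_curve \<nu> B"
  shows "(\<lambda>u. Bm \<nu> t u) \<in> borel_measurable lborel"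
proof -
  have "(\<lambda>x. (t, x)) \<in> measurable lborel (lborel \<Otimes>\<^sub>M lborel)" by (rule measurable_Pair1') simp
  from measurable_compose[OF this meas_Bm2[OF assms]] show ?thesis by simp
qed

lemma meas_Gf:
  assumes "admissible_curve \<nu> B"
  shows "Gf \<nu> \<in> borel_measurable lborel"
proof -
  have "(\<lambda>x. Bm \<nu> (snd x) (fst x)) \<in> borel_measurable (lborel \<Otimes>\<^sub>M lborel)"
    using measurable_compose[OF measurable_Pair[OF measurable_snd measurable_fst] meas_Bm2[OF assms]]
    by simp
  then have "(\<lambda>(u, t). ennreal ((Bm \<nu> t u)\<^sup>2) * indicator {0..1} t) \<in> borel_measurable (lborel \<Otimes>\<^sub>M lborel)"
    by (simp add: case_prod_beta')
  then show ?thesis unfolding Gf_def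
    by (rule sigma_finite_measure.borel_measurable_nn_integral[OF sigma_finite_lborel])
qed

lemma nn_lebesgue_01:
  fixes f g :: "real \<Rightarrow> ennreal"
  assumes eq: "\<And>t. 0 \<le> t \<Longrightarrow> t < 1 \<Longrightarrow> f t = g t" and g: "g \<in> borel_measurable lborel"
  shows "(\<integral>\<^sup>+ t. f t \<partial>lebesgue_on {0..1}) = (\<integral>\<^sup>+ t. g t * indicator {0..1} t \<partial>lborel)"
proof -
  have "(\<integral>\<^sup>+ t. f t \<partial>lebesgue_on {0..1}) = (\<integral>\<^sup>+ t. f t * indicator {0..1} t \<partial>lebesgue)"
    by (rule nn_integral_restrict_space) simp
  also have "\<dots> = (\<integral>\<^sup>+ t. g t * indicator {0..1} t \<partial>lebesgue)"
  proof (rule nn_integral_cong_AE)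
    have "AE t in lebesgue. t \<noteq> (1::real)" by (rule AE_completion[OF AE_lborel_singleton])
    then show "AE t in lebesgue. f t * indicator {0..1} t = g t * indicator {0..1} t"
      by eventually_elim (auto simp: eq indicator_def)
  qed
  also have "\<dots> = (\<integral>\<^sup>+ t. g t * indicator {0..1} t \<partial>lborel)"
    by (rule nn_integral_completion)
  finally show ?thesis .
qed

lemma nn_lebesgue_ioo:
  fixes f g :: "real \<Rightarrow> ennreal"
  assumes eq: "\<And>t. 0 < t \<Longrightarrow> t < 1 \<Longrightarrow> f t = g t" and g: "g \<in> borel_measurable lborel"
  shows "(\<integral>\<^sup>+ t. f t \<partial>lebesgue_on {0<..<1}) = (\<integral>\<^sup>+ t. g t * indicator {0<..<1} t \<partial>lborel)"
proof -
  have "(\<integral>\<^sup>+ t. f t \<partial>lebesgue_on {0<..<1}) = (\<integral>\<^sup>+ t. f t * indicator {0<..<1} t \<partial>lebesgue)"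
    by (rule nn_integral_restrict_space) simp
  also have "\<dots> = (\<integral>\<^sup>+ t. g t * indicator {0<..<1} t \<partial>lebesgue)"
    by (rule nn_integral_cong) (auto simp: eq indicator_def)
  also have "\<dots> = (\<integral>\<^sup>+ t. g t * indicator {0<..<1} t \<partial>lborel)"
    by (rule nn_integral_completion)
  finally show ?thesis .
qed

lemma cost_eq:
  assumes adm: "admissible_curve \<nu> B"
  shows "espline_cost B = (\<integral>\<^sup>+ u. Gf \<nu> u * indicator {0<..<1} u \<partial>lborel)"
proof -
  define IB where "IB t = (\<integral>\<^sup>+ u. ennreal ((Bm \<nu> t u)\<^sup>2) * indicator {0<..<1} u \<partial>lborel)" for t
  have mB: "(\<lambda>(t, u). ennreal ((Bm \<nu> t u)\<^sup>2) * indicator {0<..<1} u) \<in> borel_measurable (lborel \<Otimes>\<^sub>M lborel)"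
    using meas_Bm2[OF adm] by (simp add: case_prod_beta')
  have mIB: "IB \<in> borel_measurable lborel" unfolding IB_def
    by (rule sigma_finite_measure.borel_measurable_nn_integral[OF sigma_finite_lborel mB])
  have inner: "(\<integral>\<^sup>+ u. ennreal ((B t u)\<^sup>2) \<partial>lebesgue_on {0<..<1}) = IB t" if "0 \<le> t" "t < 1" for t
    unfolding IB_def
    by (rule nn_lebesgue_ioo) (use Bm_eq[OF adm that] meas_Bm_u[OF adm] in \<open>auto simp: Bm_def\<close>)
  have "espline_cost B = (\<integral>\<^sup>+ t. IB t * indicator {0..1} t \<partial>lborel)"
    unfolding espline_cost_def by (rule nn_lebesgue_01[OF inner mIB])
  also have "\<dots> = (\<integral>\<^sup>+ t. \<integral>\<^sup>+ u. ennreal ((Bm \<nu> t u)\<^sup>2) * indicator {0<..<1} u * indicator {0..1} t \<partial>lborel \<partial>lborel)"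
    unfolding IB_def
    by (rule nn_integral_cong, rule nn_integral_multc[symmetric]) (use meas_Bm_u[OF adm] in simp)
  also have "\<dots> = (\<integral>\<^sup>+ u. \<integral>\<^sup>+ t. ennreal ((Bm \<nu> t u)\<^sup>2) * indicator {0<..<1} u * indicator {0..1} t \<partial>lborel \<partial>lborel)"
  proof (rule lborel_pair.Fubini'[symmetric])
    show "(\<lambda>(t, u). ennreal ((Bm \<nu> t u)\<^sup>2) * indicator {0<..<1} u * indicator {0..1} t) \<in> borel_measurable (lborel \<Otimes>\<^sub>M lborel)"
      using meas_Bm2[OF adm] by (simp add: case_prod_beta')
  qed
  also have "\<dots> = (\<integral>\<^sup>+ u. Gf \<nu> u * indicator {0<..<1} u \<partial>lborel)"
    unfolding Gf_def
    by (rule nn_integral_cong, subst nn_integral_multc[symmetric]) (use meas_Bm_t[OF adm] in \<open>auto intro!: nn_integral_cong simp: ac_simps\<close>)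
  finally show ?thesis .
qed

lemma G_eq:
  assumes adm: "admissible_curve \<nu> B" and c: "c \<ge> 0"
    and u: "\<And>k. k < n \<Longrightarrow> u k \<in> {0<..<1}"
  shows "(\<integral>\<^sup>+ t. ennreal (c * (\<Sum>k<n. (B t (u k))\<^sup>2)) \<partial>lebesgue_on {0..1}) = ennreal c * (\<Sum>k<n. Gf \<nu> (u k))"
proof -
  have "(\<integral>\<^sup>+ t. ennreal (c * (\<Sum>k<n. (B t (u k))\<^sup>2)) \<partial>lebesgue_on {0..1})
      = (\<integral>\<^sup>+ t. ennreal (c * (\<Sum>k<n. (Bm \<nu> t (u k))\<^sup>2)) * indicator {0..1} t \<partial>lborel)"
  proof (rule nn_lebesgue_01)
    fix t :: real assume t: "0 \<le> t" "t < 1"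
    have "B t (u k) = Bm \<nu> t (u k)" if "k < n" for k
      using Bm_eq[OF adm t, of "u k"] u[OF that] by (simp add: Bm_def)
    then show "ennreal (c * (\<Sum>k<n. (B t (u k))\<^sup>2)) = ennreal (c * (\<Sum>k<n. (Bm \<nu> t (u k))\<^sup>2))"
      by simp
  qed (use meas_Bm_t[OF adm] in simp)
  also have "\<dots> = (\<integral>\<^sup>+ t. ennreal c * (\<Sum>k<n. ennreal ((Bm \<nu> t (u k))\<^sup>2) * indicator {0..1} t) \<partial>lborel)"
  proof (rule nn_integral_cong)
    fix t
    have "ennreal (c * (\<Sum>k<n. (Bm \<nu> t (u k))\<^sup>2)) = ennreal c * ennreal (\<Sum>k<n. (Bm \<nu> t (u k))\<^sup>2)"
      by (rule ennreal_mult) (use c in \<open>auto intro: sum_nonneg\<close>)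
    also have "ennreal (\<Sum>k<n. (Bm \<nu> t (u k))\<^sup>2) = (\<Sum>k<n. ennreal ((Bm \<nu> t (u k))\<^sup>2))"
      by (rule sum_ennreal[symmetric]) simp
    finally have eq: "ennreal (c * (\<Sum>k<n. (Bm \<nu> t (u k))\<^sup>2)) = ennreal c * (\<Sum>k<n. ennreal ((Bm \<nu> t (u k))\<^sup>2))" .
    show "ennreal (c * (\<Sum>k<n. (Bm \<nu> t (u k))\<^sup>2)) * indicator {0..1} t =
         ennreal c * (\<Sum>k<n. ennreal ((Bm \<nu> t (u k))\<^sup>2) * indicator {0..1} t)"
      unfolding eq by (simp only: sum_distrib_right mult.assoc)
  qed
  also have "\<dots> = ennreal c * (\<Sum>k<n. Gf \<nu> (u k))"
    unfolding Gf_def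
    by (subst nn_integral_cmult) (use meas_Bm_t[OF adm] in \<open>auto simp: nn_integral_sum\<close>)
  finally show ?thesis .
qed

lemma select_cell:
  fixes G :: "real \<Rightarrow> ennreal"
  assumes G: "G \<in> borel_measurable lborel" and lr: "l < r"
    and fin: "(\<integral>\<^sup>+u. G u * indicator {l<..<r} u \<partial>lborel) < \<infinity>" and e: "e > 0"
  shows "\<exists>u \<in> {l<..<r}. ennreal (r - l) * G u \<le> (\<integral>\<^sup>+u. G u * indicator {l<..<r} u \<partial>lborel) + ennreal e"
proof (rule ccontr)
  define I where "I = (\<integral>\<^sup>+u. G u * indicator {l<..<r} u \<partial>lborel)"
  assume "\<not> ?thesis"
  then have lt: "\<And>u. u \<in> {l<..<r} \<Longrightarrow> I + ennreal e < ennreal (r - l) * G u"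
    unfolding I_def by (auto simp: not_le)
  have Ifin: "I < \<infinity>" using fin unfolding I_def .
  obtain Ir where Ir: "I = ennreal Ir" "Ir \<ge> 0" using Ifin by (cases I rule: ennreal_cases) auto
  have "(\<integral>\<^sup>+u. (I + ennreal e) * indicator {l<..<r} u \<partial>lborel) \<le> (\<integral>\<^sup>+u. ennreal (r - l) * (G u * indicator {l<..<r} u) \<partial>lborel)"
    by (rule nn_integral_mono) (auto simp: indicator_def intro: less_imp_le[OF lt])
  also have "\<dots> = ennreal (r - l) * I"
    unfolding I_def by (rule nn_integral_cmult) (use G in simp)
  finally have "(I + ennreal e) * ennreal (r - l) \<le> ennreal (r - l) * I"
    using lr by (simp add: nn_integral_cmult_indicator)
  then have "ennreal ((Ir + e) * (r - l)) \<le> ennreal ((r - l) * Ir)"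
    using Ir e lr by (simp add: ennreal_mult[symmetric] ennreal_plus[symmetric] del: ennreal_plus)
  then have "(Ir + e) * (r - l) \<le> (r - l) * Ir"
    using Ir lr by (subst (asm) ennreal_le_iff) auto
  then show False using e lr by (simp add: algebra_simps)
qed

lemma cells_indicator:
  fixes a h :: real
  assumes h: "h > 0" and a: "0 \<le> a" and an: "a + real n * h \<le> 1"
  shows "(\<Sum>k<n. indicator {a + real k * h<..<a + real (Suc k) * h} x) \<le> (indicator {0<..<1} x :: ennreal)"
proof (cases "\<exists>k<n. x \<in> {a + real k * h<..<a + real (Suc k) * h}")
  case True
  then obtain k0 where k0: "k0 < n" "x \<in> {a + real k0 * h<..<a + real (Suc k0) * h}" by blast
  have uniq: "k = k0" if "k < n" "x \<in> {a + real k * h<..<a + real (Suc k) * h}" for k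
  proof (rule ccontr)
    assume "k \<noteq> k0"
    then have "Suc k \<le> k0 \<or> Suc k0 \<le> k" by auto
    then show False
    proof
      assume "Suc k \<le> k0"
      then have "real (Suc k) * h \<le> real k0 * h" using h by (intro mult_right_mono) auto
      then show False using that k0 by auto
    next
      assume "Suc k0 \<le> k"
      then have "real (Suc k0) * h \<le> real k * h" using h by (intro mult_right_mono) auto
      then show False using that k0 by auto
    qed
  qed
  have xin: "x \<in> {0<..<1}"
  proof -
    have m1: "real (Suc k0) * h \<le> real n * h" using h k0 by (intro mult_right_mono) auto
    have x1: "a + real k0 * h < x" and x2: "x < a + real (Suc k0) * h"
      using k0(2) by (simp_all only: greaterThanLessThan_iff)
    have "0 \<le> real k0 * h" using h by simp
    then have "0 < x" "x < 1" using x1 x2 m1 a an by linarith+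
    then show ?thesis by simp
  qed
  have "(\<Sum>k<n. indicator {a + real k * h<..<a + real (Suc k) * h} x) = (\<Sum>k<n. if k = k0 then (1::ennreal) else 0)"
  proof (rule sum.cong[OF refl])
    fix k assume k: "k \<in> {..<n}"
    show "indicator {a + real k * h<..<a + real (Suc k) * h} x = (if k = k0 then (1::ennreal) else 0)"
    proof (cases "k = k0")
      case True
      then show ?thesis using k0(2) by simp
    next
      case False
      then have "x \<notin> {a + real k * h<..<a + real (Suc k) * h}" using uniq k by blast
      then show ?thesis using False by simp
    qed
  qed
  also have "\<dots> = 1" using k0 by simp
  also have "(1::ennreal) = indicator {0<..<1} x" using xin by simp
  finally show ?thesis by simp
next
  case False
  then have "(\<Sum>k<n. indicator {a + real k * h<..<a + real (Suc k) * h} x) = (0::ennreal)"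
    by (intro sum.neutral) (auto simp: indicator_def)
  then show ?thesis by simp
qed

lemma select_all:
  fixes G :: "real \<Rightarrow> ennreal" and a h e :: real and n :: nat
  assumes G: "G \<in> borel_measurable lborel" and h: "h > 0" and a: "0 \<le> a" and an: "a + real n * h \<le> 1"
    and fin: "(\<integral>\<^sup>+u. G u * indicator {0<..<1} u \<partial>lborel) < \<infinity>" and e: "e > 0"
  shows "\<exists>u. (\<forall>k<n. u k \<in> {a + real k * h<..<a + real (Suc k) * h}) \<and>
     ennreal h * (\<Sum>k<n. G (u k)) \<le> (\<integral>\<^sup>+u. G u * indicator {0<..<1} u \<partial>lborel) + ennreal e"
proof (cases "n = 0")
  case True
  then show ?thesis by simp
next
  case False
  define C where "C k = {a + real k * h<..<a + real (Suc k) * h}" for k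
  define I where "I k = (\<integral>\<^sup>+u. G u * indicator (C k) u \<partial>lborel)" for k
  have sub: "I k \<le> (\<integral>\<^sup>+u. G u * indicator {0<..<1} u \<partial>lborel)" if "k < n" for k
  proof -
    have "C k \<subseteq> {0<..<1}"
    proof -
      have "real (Suc k) * h \<le> real n * h" using h that by (intro mult_right_mono) auto
      moreover have "0 \<le> real k * h" using h by simp
      ultimately show ?thesis unfolding C_def
      proof (intro subsetI)
        fix x assume m1: "real (Suc k) * h \<le> real n * h" and m0: "0 \<le> real k * h"
          and "x \<in> {a + real k * h<..<a + real (Suc k) * h}"
        then have x1: "a + real k * h < x" and x2: "x < a + real (Suc k) * h"
          by (simp_all only: greaterThanLessThan_iff)
        have "0 < x" "x < 1" using x1 x2 m1 m0 a an by linarith+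
        then show "x \<in> {0<..<1}" by simp
      qed
    qed
    then show ?thesis unfolding I_def
      by (intro nn_integral_mono) (auto simp: indicator_def intro: mult_left_mono)
  qed
  have ex: "\<exists>u \<in> C k. ennreal h * G u \<le> I k + ennreal (e / real n)" if "k < n" for k
  proof -
    have fk: "I k < \<infinity>" using sub[OF that] fin by (rule le_less_trans)
    have hk: "a + real (Suc k) * h - (a + real k * h) = h" by (simp add: algebra_simps)
    have lr: "a + real k * h < a + real (Suc k) * h" using h by simp
    have en: "e / real n > 0" using e False by simp
    from select_cell[OF G lr fk[unfolded I_def C_def] en]
    show ?thesis unfolding I_def C_def hk .
  qed
  then obtain u where u: "\<And>k. k < n \<Longrightarrow> u k \<in> C k \<and> ennreal h * G (u k) \<le> I k + ennreal (e / real n)"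
    using bchoice[of "{..<n}" "\<lambda>k u. u \<in> C k \<and> ennreal h * G u \<le> I k + ennreal (e / real n)"] by auto
  have s1: "ennreal h * (\<Sum>k<n. G (u k)) \<le> (\<Sum>k<n. I k + ennreal (e / real n))"
    unfolding sum_distrib_left by (rule sum_mono) (use u in auto)
  have s2: "(\<Sum>k<n. I k + ennreal (e / real n)) = (\<Sum>k<n. I k) + (\<Sum>k<n. ennreal (e / real n))"
    by (rule sum.distrib)
  have s3: "(\<Sum>k<n. ennreal (e / real n)) = ennreal e"
  proof -
    have "(\<Sum>k<n. ennreal (e / real n)) = ennreal (\<Sum>k<n. e / real n)"
      by (rule sum_ennreal) (use e in simp)
    also have "(\<Sum>k<n. e / real n) = e" using False by simp
    finally show ?thesis .
  qed
  have s4: "(\<Sum>k<n. I k) = (\<integral>\<^sup>+u. G u * (\<Sum>k<n. indicator (C k) u) \<partial>lborel)"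
  proof -
    have "(\<Sum>k<n. I k) = (\<integral>\<^sup>+u. (\<Sum>k<n. G u * indicator (C k) u) \<partial>lborel)"
      unfolding I_def by (rule nn_integral_sum[symmetric]) (use G in \<open>simp add: C_def\<close>)
    then show ?thesis by (simp only: sum_distrib_left)
  qed
  have s5: "(\<integral>\<^sup>+u. G u * (\<Sum>k<n. indicator (C k) u) \<partial>lborel) \<le> (\<integral>\<^sup>+u. G u * indicator {0<..<1} u \<partial>lborel)"
    by (intro nn_integral_mono mult_left_mono) (use cells_indicator[OF h a an] in \<open>simp_all add: C_def\<close>)
  have "ennreal h * (\<Sum>k<n. G (u k)) \<le> (\<integral>\<^sup>+u. G u * indicator {0<..<1} u \<partial>lborel) + ennreal e"
    using s1 unfolding s2 s3 s4 using s5 add_right_mono order_trans by blast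
  moreover have "\<forall>k<n. u k \<in> {a + real k * h<..<a + real (Suc k) * h}" using u unfolding C_def by blast
  ultimately show ?thesis by (intro exI[of _ u] conjI)
qed

lemma cheb:
  fixes z x :: "nat \<Rightarrow> real"
  assumes n: "n > 0" and pos: "\<And>i j. i < n \<Longrightarrow> j < n \<Longrightarrow> 0 \<le> (z i - z j) * (x i - x j)"
  shows "0 \<le> (\<Sum>k<n. (z k - (\<Sum>j<n. z j) / real n) * x k)"
proof -
  have "0 \<le> (\<Sum>i<n. \<Sum>j<n. (z i - z j) * (x i - x j))"
    by (intro sum_nonneg pos) auto
  also have "(\<Sum>i<n. \<Sum>j<n. (z i - z j) * (x i - x j))
     = (\<Sum>i<n. \<Sum>j<n. z i * x i) - (\<Sum>i<n. \<Sum>j<n. z i * x j) - (\<Sum>i<n. \<Sum>j<n. z j * x i) + (\<Sum>i<n. \<Sum>j<n. z j * x j)"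
    by (simp add: algebra_simps sum.distrib sum_subtractf)
  also have "\<dots> = 2 * real n * (\<Sum>k<n. z k * x k) - 2 * (\<Sum>j<n. z j) * (\<Sum>k<n. x k)"
    by (simp add: sum_distrib_left[symmetric] sum_distrib_right[symmetric] sum.swap[of _ "{..<n}" "{..<n}"] algebra_simps)
  also have "\<dots> = 2 * real n * (\<Sum>k<n. (z k - (\<Sum>j<n. z j) / real n) * x k)"
  proof -
    have e: "(\<Sum>k<n. (z k - c) * x k) = (\<Sum>k<n. z k * x k) - c * (\<Sum>k<n. x k)" for c
      by (simp add: left_diff_distrib sum_subtractf sum_distrib_left)
    show ?thesis unfolding e using n by (simp add: field_simps)
  qed
  finally show ?thesis using n by (simp add: zero_le_mult_iff)
qed

lemma bessel:
  fixes d b :: "nat \<Rightarrow> real"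
  assumes n: "n > 0" and d0: "(\<Sum>k<n. d k) = 0" and dp: "(\<Sum>k<n. (d k)\<^sup>2) > 0"
  shows "(\<Sum>k<n. b k)\<^sup>2 / real n + (\<Sum>k<n. d k * b k)\<^sup>2 / (\<Sum>k<n. (d k)\<^sup>2) \<le> (\<Sum>k<n. (b k)\<^sup>2)"
proof -
  define m where "m = (\<Sum>k<n. b k) / real n"
  have "(\<Sum>k<n. d k * b k) = (\<Sum>k<n. d k * (b k - m))"
    using d0 by (simp add: algebra_simps sum_subtractf sum_distrib_left[symmetric] sum_distrib_right[symmetric])
  then have cs: "(\<Sum>k<n. d k * b k)\<^sup>2 \<le> (\<Sum>k<n. (d k)\<^sup>2) * (\<Sum>k<n. (b k - m)\<^sup>2)"
    using Cauchy_Schwarz_ineq_sum[of d "\<lambda>k. b k - m" "{..<n}"] by simp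
  have v: "(\<Sum>k<n. (b k - m)\<^sup>2) = (\<Sum>k<n. (b k)\<^sup>2) - (\<Sum>k<n. b k)\<^sup>2 / real n"
  proof -
    have "(\<Sum>k<n. (b k - m)\<^sup>2) = (\<Sum>k<n. (b k)\<^sup>2) - 2 * m * (\<Sum>k<n. b k) + real n * m\<^sup>2"
      by (simp add: power2_eq_square algebra_simps sum.distrib sum_subtractf sum_distrib_left)
    then show ?thesis using n unfolding m_def by (simp add: power2_eq_square field_simps)
  qed
  have "(\<Sum>k<n. d k * b k)\<^sup>2 / (\<Sum>k<n. (d k)\<^sup>2) \<le> (\<Sum>k<n. (b k - m)\<^sup>2)"
    using cs dp by (simp add: divide_le_eq mult.commute)
  then show ?thesis unfolding v by simp
qed

lemma interp_alg:
  fixes z :: "nat \<Rightarrow> real" and h :: real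
  assumes n: "n > 0"
  defines "zb \<equiv> (\<Sum>k<n. z k) / real n"
  defines "V \<equiv> h * (\<Sum>k<n. (z k - zb)\<^sup>2)"
  assumes V: "V \<noteq> 0"
  shows "(h / V) * (\<Sum>k<n. (z k - zb) * (m + s * z k)) = s"
    and "(\<Sum>k<n. m + s * z k) / real n - zb * s = m"
proof -
  have d0: "(\<Sum>k<n. z k - zb) = 0" using n unfolding zb_def by (simp add: sum_subtractf)
  have "(\<Sum>k<n. (z k - zb) * (m + s * z k)) = (\<Sum>k<n. m * (z k - zb) + s * ((z k - zb) * z k))"
    by (rule sum.cong) (auto simp: algebra_simps)
  also have "\<dots> = m * (\<Sum>k<n. z k - zb) + s * (\<Sum>k<n. (z k - zb) * z k)"
    by (simp add: sum.distrib sum_distrib_left)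
  also have "(\<Sum>k<n. (z k - zb) * z k) = (\<Sum>k<n. (z k - zb)\<^sup>2 + zb * (z k - zb))"
    by (rule sum.cong) (auto simp: power2_eq_square algebra_simps)
  also have "\<dots> = (\<Sum>k<n. (z k - zb)\<^sup>2) + zb * (\<Sum>k<n. z k - zb)"
    by (simp add: sum.distrib sum_distrib_left)
  finally have "(\<Sum>k<n. (z k - zb) * (m + s * z k)) = s * (\<Sum>k<n. (z k - zb)\<^sup>2)"
    using d0 by simp
  then show "(h / V) * (\<Sum>k<n. (z k - zb) * (m + s * z k)) = s"
    using V unfolding V_def by (auto simp: field_simps)
  show "(\<Sum>k<n. m + s * z k) / real n - zb * s = m"
    using n unfolding zb_def by (simp add: sum.distrib sum_distrib_left[symmetric] field_simps)
qed

lemma inner_bound: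
  fixes P S zb W V K :: real
  assumes W: "W > 0" and V: "V > 0"
    and K1: "(1 + \<bar>zb\<bar>) \<le> K * W" and K2: "(1 + \<bar>zb\<bar> + zb\<^sup>2) \<le> K * V"
    and bes: "W * P\<^sup>2 + V * S\<^sup>2 \<le> T"
  shows "P\<^sup>2 - 2 * P * S * zb + S\<^sup>2 * (1 + zb\<^sup>2) \<le> K * T"
proof -
  have a: "- 2 * P * S * zb \<le> \<bar>zb\<bar> * (P\<^sup>2 + S\<^sup>2)"
  proof -
    have "\<bar>2 * P * S\<bar> \<le> P\<^sup>2 + S\<^sup>2"
      using sum_squares_bound[of P S] sum_squares_bound[of P "-S"] by (auto simp: abs_if algebra_simps)
    then have "\<bar>2 * P * S * zb\<bar> \<le> \<bar>zb\<bar> * (P\<^sup>2 + S\<^sup>2)"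
      by (simp add: abs_mult mult.commute mult_left_mono)
    then show ?thesis by linarith
  qed
  have "P\<^sup>2 - 2 * P * S * zb + S\<^sup>2 * (1 + zb\<^sup>2) \<le> (1 + \<bar>zb\<bar>) * P\<^sup>2 + (1 + \<bar>zb\<bar> + zb\<^sup>2) * S\<^sup>2"
    using a by (simp add: algebra_simps)
  also have "\<dots> \<le> (K * W) * P\<^sup>2 + (K * V) * S\<^sup>2"
    by (intro add_mono mult_right_mono K1 K2) auto
  also have "\<dots> = K * (W * P\<^sup>2 + V * S\<^sup>2)" by (simp add: algebra_simps)
  also have "\<dots> \<le> K * T"
  proof -
    have "K \<ge> 0" using K1 W by (smt (verit) abs_ge_zero mult_nonpos_nonneg)
    then show ?thesis using bes by (rule mult_left_mono[rotated])
  qed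
  finally show ?thesis .
qed

definition zbar :: "(nat \<Rightarrow> real) \<Rightarrow> nat \<Rightarrow> real" where
  "zbar u n = (\<Sum>k<n. zq (u k)) / real n"
definition Vv :: "real \<Rightarrow> (nat \<Rightarrow> real) \<Rightarrow> nat \<Rightarrow> real" where
  "Vv h u n = h * (\<Sum>k<n. (zq (u k) - zbar u n)\<^sup>2)"
definition lin :: "real \<Rightarrow> (nat \<Rightarrow> real) \<Rightarrow> nat \<Rightarrow> (nat \<Rightarrow> real) \<Rightarrow> real \<times> real" where
  "lin h u n x = ((\<Sum>k<n. x k) / real n - zbar u n * ((h / Vv h u n) * (\<Sum>k<n. (zq (u k) - zbar u n) * x k)),
                  (h / Vv h u n) * (\<Sum>k<n. (zq (u k) - zbar u n) * x k))"
definition gc :: "(real \<Rightarrow> real measure) \<Rightarrow> real \<Rightarrow> (nat \<Rightarrow> real) \<Rightarrow> nat \<Rightarrow> real \<Rightarrow> real measure" where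
  "gc \<nu> h u n t = gaussian (fst (lin h u n (\<lambda>k. quantile (\<nu> t) (u k)))) (snd (lin h u n (\<lambda>k. quantile (\<nu> t) (u k))))"
definition Ac :: "(real \<Rightarrow> real \<Rightarrow> real) \<Rightarrow> real \<Rightarrow> (nat \<Rightarrow> real) \<Rightarrow> nat \<Rightarrow> real \<Rightarrow> real \<Rightarrow> real" where
  "Ac B h u n t v = fst (lin h u n (\<lambda>k. B t (u k))) + snd (lin h u n (\<lambda>k. B t (u k))) * zq v"

lemma lin_deriv:
  assumes "\<And>k. k < n \<Longrightarrow> ((\<lambda>s. x s k) has_real_derivative x' k) (at t within S)"
  shows "((\<lambda>s. fst (lin h u n (x s)) + snd (lin h u n (x s)) * c) has_real_derivative
            (fst (lin h u n x') + snd (lin h u n x') * c)) (at t within S)"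
proof -
  have d1: "((\<lambda>s. \<Sum>k<n. x s k) has_real_derivative (\<Sum>k<n. x' k)) (at t within S)"
    by (rule DERIV_sum) (use assms in auto)
  have d2: "((\<lambda>s. \<Sum>k<n. (zq (u k) - zbar u n) * x s k) has_real_derivative (\<Sum>k<n. (zq (u k) - zbar u n) * x' k)) (at t within S)"
  proof (rule DERIV_sum)
    fix k assume "k \<in> {..<n}"
    then show "((\<lambda>s. (zq (u k) - zbar u n) * x s k) has_real_derivative (zq (u k) - zbar u n) * x' k) (at t within S)"
      using assms by (intro DERIV_cmult) auto
  qed
  have d3: "((\<lambda>s. (h / Vv h u n) * (\<Sum>k<n. (zq (u k) - zbar u n) * x s k)) has_real_derivative
      (h / Vv h u n) * (\<Sum>k<n. (zq (u k) - zbar u n) * x' k)) (at t within S)"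
    by (rule DERIV_cmult[OF d2])
  have "((\<lambda>s. ((\<Sum>k<n. x s k) / real n - zbar u n * ((h / Vv h u n) * (\<Sum>k<n. (zq (u k) - zbar u n) * x s k)))
            + ((h / Vv h u n) * (\<Sum>k<n. (zq (u k) - zbar u n) * x s k)) * c)
         has_real_derivative
          ((\<Sum>k<n. x' k) / real n - zbar u n * ((h / Vv h u n) * (\<Sum>k<n. (zq (u k) - zbar u n) * x' k)))
            + ((h / Vv h u n) * (\<Sum>k<n. (zq (u k) - zbar u n) * x' k)) * c) (at t within S)"
    by (intro DERIV_add DERIV_diff DERIV_cdivide DERIV_cmult DERIV_cmult_right d1 d3)
  then show ?thesis by (simp add: lin_def)
qed

lemma tt_range:
  fixes tt :: "nat \<Rightarrow> real"
  assumes t0: "tt 0 = 0" and tN: "tt N = 1" and t_mono: "\<And>i. i < N \<Longrightarrow> tt i < tt (Suc i)"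
    and i: "i \<le> N"
  shows "tt i \<in> {0..1}"
proof -
  have up: "tt i \<le> tt j" if "i \<le> j" "j \<le> N" for i j
    using that
  proof (induction j)
    case 0 then show ?case by simp
  next
    case (Suc j)
    show ?case
    proof (cases "i = Suc j")
      case True then show ?thesis by simp
    next
      case False
      then have "tt i \<le> tt j" using Suc by auto
      also have "tt j < tt (Suc j)" using t_mono Suc by auto
      finally show ?thesis by simp
    qed
  qed
  show ?thesis using up[of 0 i] up[of i N] i t0 tN by auto
qed

lemma gauss_inner:
  fixes a b :: real
  shows "(\<integral>\<^sup>+v. ennreal ((a + b * zq v)\<^sup>2) \<partial>lebesgue_on {0<..<1}) = ennreal (a\<^sup>2 + b\<^sup>2)"
proof -
  have hb: "has_bochner_integral lborel (\<lambda>x. std_normal_density x * (a + b * x)\<^sup>2) (a\<^sup>2 + b\<^sup>2)"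
  proof -
    have h0: "has_bochner_integral lborel (\<lambda>x. std_normal_density x * x ^ (2 * 0)) 1"
      using std_normal_moment_even[of 0] by simp
    have h1: "has_bochner_integral lborel (\<lambda>x. std_normal_density x * x ^ (2 * 0 + 1)) 0"
      using std_normal_moment_odd[of 0] by simp
    have h2: "has_bochner_integral lborel (\<lambda>x. std_normal_density x * x ^ (2 * 1)) 1"
      using std_normal_moment_even[of 1] by simp
    have "has_bochner_integral lborel (\<lambda>x. a\<^sup>2 * (std_normal_density x * x ^ (2 * 0)) + (2 * a * b) * (std_normal_density x * x ^ (2 * 0 + 1)) + b\<^sup>2 * (std_normal_density x * x ^ (2 * 1)))
          (a\<^sup>2 * 1 + (2 * a * b) * 0 + b\<^sup>2 * 1)"
      by (intro has_bochner_integral_add has_bochner_integral_mult_right h0 h1 h2)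
    moreover have "(\<lambda>x. a\<^sup>2 * (std_normal_density x * x ^ (2 * 0)) + (2 * a * b) * (std_normal_density x * x ^ (2 * 0 + 1)) + b\<^sup>2 * (std_normal_density x * x ^ (2 * 1)))
        = (\<lambda>x. std_normal_density x * (a + b * x)\<^sup>2)"
      by (rule ext) (simp add: power2_eq_square algebra_simps)
    ultimately show ?thesis by simp
  qed
  have "(\<integral>\<^sup>+v. ennreal ((a + b * zq v)\<^sup>2) \<partial>lebesgue_on {0<..<1}) = (\<integral>\<^sup>+x. ennreal (std_normal_density x) * ennreal ((a + b * x)\<^sup>2) \<partial>lborel)"
    by (rule zq_nn_integral[where g="\<lambda>x. (a + b * x)\<^sup>2"]) simp
  also have "\<dots> = (\<integral>\<^sup>+x. ennreal (std_normal_density x * (a + b * x)\<^sup>2) \<partial>lborel)"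
    by (rule nn_integral_cong) (simp add: ennreal_mult)
  also have "\<dots> = ennreal (integral\<^sup>L lborel (\<lambda>x. std_normal_density x * (a + b * x)\<^sup>2))"
    by (rule nn_integral_eq_integral) (use hb in \<open>auto dest: has_bochner_integral.intros intro: integrable.intros\<close>)
  also have "integral\<^sup>L lborel (\<lambda>x. std_normal_density x * (a + b * x)\<^sup>2) = a\<^sup>2 + b\<^sup>2"
    by (rule has_bochner_integral_integral_eq[OF hb])
  finally show ?thesis .
qed

lemma sc_nonneg:
  assumes adm: "admissible_curve \<nu> B" and n: "n > 0" and h: "h > 0" and V: "Vv h u n > 0"
    and u: "\<forall>k<n. u k \<in> {0<..<1}" and t: "t \<in> {0..1}"
  shows "snd (lin h u n (\<lambda>k. quantile (\<nu> t) (u k))) \<ge> 0"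
proof -
  have P2: "P2 (\<nu> t)" using adm t by (auto simp: admissible_curve_def)
  have pos: "0 \<le> (zq (u i) - zq (u j)) * (quantile (\<nu> t) (u i) - quantile (\<nu> t) (u j))"
    if "i < n" "j < n" for i j
  proof (cases "u i \<le> u j")
    case True
    have "zq (u i) \<le> zq (u j)" using mono_onD[OF zq_mono] u that True by auto
    moreover have "quantile (\<nu> t) (u i) \<le> quantile (\<nu> t) (u j)"
      using mono_onD[OF quantile_mono[OF P2]] u that True by auto
    ultimately show ?thesis by (intro mult_nonpos_nonpos) auto
  next
    case False
    have "zq (u j) \<le> zq (u i)" using mono_onD[OF zq_mono] u that False by auto
    moreover have "quantile (\<nu> t) (u j) \<le> quantile (\<nu> t) (u i)"
      using mono_onD[OF quantile_mono[OF P2]] u that False by auto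
    ultimately show ?thesis by (intro mult_nonneg_nonneg) auto
  qed
  have "0 \<le> (\<Sum>k<n. (zq (u k) - (\<Sum>j<n. zq (u j)) / real n) * quantile (\<nu> t) (u k))"
    by (rule cheb[OF n]) (rule pos)
  then show ?thesis unfolding lin_def zbar_def[symmetric] using h V by simp
qed

lemma gc_quantile:
  assumes "snd (lin h u n (\<lambda>k. quantile (\<nu> t) (u k))) \<ge> 0" "0 < v" "v < 1"
  shows "quantile (gc \<nu> h u n t) v = fst (lin h u n (\<lambda>k. quantile (\<nu> t) (u k))) + snd (lin h u n (\<lambda>k. quantile (\<nu> t) (u k))) * zq v"
  unfolding gc_def by (rule quantile_gaussian[OF assms])

lemma gc_adm:
  assumes adm: "admissible_curve \<nu> B" and n: "n > 0" and h: "h > 0" and V: "Vv h u n > 0"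
    and u: "\<forall>k<n. u k \<in> {0<..<1}"
  shows "admissible_curve (gc \<nu> h u n) (Ac B h u n)"
proof -
  have "\<forall>v\<in>{0<..<1}. \<exists>W. \<forall>t\<in>{0..1}. ((\<lambda>s. quantile (\<nu> s) v) has_real_derivative W t) (at t within {0..1}) \<and>
        (W has_real_derivative B t v) (at t within {0..1})"
    using adm unfolding admissible_curve_def by blast
  then obtain Vw where Vw: "\<And>v t. v \<in> {0<..<1} \<Longrightarrow> t \<in> {0..1} \<Longrightarrow>
      ((\<lambda>s. quantile (\<nu> s) v) has_real_derivative Vw v t) (at t within {0..1}) \<and>
      (Vw v has_real_derivative B t v) (at t within {0..1})"
    by metis
  have sc0: "\<And>t. t \<in> {0..1} \<Longrightarrow> snd (lin h u n (\<lambda>k. quantile (\<nu> t) (u k))) \<ge> 0"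
    using sc_nonneg[OF adm n h V u] by blast
  show ?thesis
    unfolding admissible_curve_def
  proof (intro conjI ballI)
    fix t :: real assume t: "t \<in> {0..1}"
    show "P2 (gc \<nu> h u n t)" unfolding gc_def by (rule P2_gaussian[OF sc0[OF t]])
  next
    fix v :: real assume v: "v \<in> {0<..<1}"
    define W where "W t = fst (lin h u n (\<lambda>k. Vw (u k) t)) + snd (lin h u n (\<lambda>k. Vw (u k) t)) * zq v" for t
    show "\<exists>W. \<forall>t\<in>{0..1}. ((\<lambda>s. quantile (gc \<nu> h u n s) v) has_real_derivative W t) (at t within {0..1}) \<and>
        (W has_real_derivative Ac B h u n t v) (at t within {0..1})"
    proof (intro exI[of _ W] ballI conjI)
      fix t :: real assume t: "t \<in> {0..1}"
      have d1: "((\<lambda>s. fst (lin h u n (\<lambda>k. quantile (\<nu> s) (u k))) + snd (lin h u n (\<lambda>k. quantile (\<nu> s) (u k))) * zq v)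
          has_real_derivative W t) (at t within {0..1})"
        unfolding W_def by (rule lin_deriv) (use Vw u t in auto)
      show "((\<lambda>s. quantile (gc \<nu> h u n s) v) has_real_derivative W t) (at t within {0..1})"
      proof (rule has_field_derivative_transform_within[OF d1 zero_less_one t])
        fix s assume "s \<in> {0..1}" "dist s t < 1"
        then show "fst (lin h u n (\<lambda>k. quantile (\<nu> s) (u k))) + snd (lin h u n (\<lambda>k. quantile (\<nu> s) (u k))) * zq v =
            quantile (gc \<nu> h u n s) v"
          using gc_quantile[OF sc0] v by auto
      qed
      show "(W has_real_derivative Ac B h u n t v) (at t within {0..1})"
        unfolding W_def Ac_def by (rule lin_deriv) (use Vw u t in auto)
    qed
  qed
qed

lemma lin_cong: "(\<And>k. k < n \<Longrightarrow> x k = y k) \<Longrightarrow> lin h u n x = lin h u n y"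
proof -
  assume e: "\<And>k. k < n \<Longrightarrow> x k = y k"
  have "(\<Sum>k<n. x k) = (\<Sum>k<n. y k)" by (rule sum.cong) (use e in auto)
  moreover have "(\<Sum>k<n. (zq (u k) - zbar u n) * x k) = (\<Sum>k<n. (zq (u k) - zbar u n) * y k)"
    by (rule sum.cong) (use e in auto)
  ultimately show ?thesis unfolding lin_def by simp
qed

lemma gc_interp:
  fixes tt :: "nat \<Rightarrow> real"
  assumes adm: "admissible_curve \<nu> B" and n: "n > 0" and h: "h > 0" and V: "Vv h u n > 0"
    and u: "\<forall>k<n. u k \<in> {0<..<1}"
    and interp: "interpolates \<nu> N tt \<mu>s" and data: "\<And>i. i \<le> N \<Longrightarrow> is_gaussian (\<mu>s i)"
  shows "interpolates (gc \<nu> h u n) N tt \<mu>s"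
  unfolding interpolates_def
proof (intro allI impI)
  fix i assume i: "i \<le> N"
  obtain m s where ms: "s \<ge> 0" "\<mu>s i = gaussian m s" using data[OF i] by (auto simp: is_gaussian_def)
  have nu: "\<nu> (tt i) = gaussian m s" using interp i ms by (simp add: interpolates_def)
  have q: "quantile (\<nu> (tt i)) (u k) = m + s * zq (u k)" if "k < n" for k
    unfolding nu by (rule quantile_gaussian[OF ms(1)]) (use u that in auto)
  have V': "h * (\<Sum>k<n. (zq (u k) - (\<Sum>k<n. zq (u k)) / real n)\<^sup>2) \<noteq> 0"
  proof -
    have "Vv h u n \<noteq> 0" using V by linarith
    then show ?thesis unfolding Vv_def zbar_def .
  qed
  note ia = interp_alg[where z="\<lambda>k. zq (u k)", OF n V', of m s]
  have "lin h u n (\<lambda>k. quantile (\<nu> (tt i)) (u k)) = lin h u n (\<lambda>k. m + s * zq (u k))"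
    by (rule lin_cong) (rule q)
  also have "\<dots> = (m, s)"
    using ia unfolding lin_def Vv_def zbar_def by simp
  finally show "gc \<nu> h u n (tt i) = \<mu>s i" unfolding gc_def ms(2) by simp
qed

lemma bes_apply:
  fixes \<beta> :: "nat \<Rightarrow> real"
  assumes n: "n > 0" and h: "h > 0" and V: "Vv h u n > 0"
  shows "(real n * h) * ((\<Sum>k<n. \<beta> k) / real n)\<^sup>2 + Vv h u n * (snd (lin h u n \<beta>))\<^sup>2 \<le> h * (\<Sum>k<n. (\<beta> k)\<^sup>2)"
proof -
  define d where "d k = zq (u k) - zbar u n" for k
  define D2 where "D2 = (\<Sum>k<n. (d k)\<^sup>2)"
  have VD: "Vv h u n = h * D2" unfolding Vv_def D2_def d_def ..
  have D2: "D2 > 0" using V h unfolding VD by (simp add: zero_less_mult_iff)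
  have d0: "(\<Sum>k<n. d k) = 0" using n unfolding d_def zbar_def by (simp add: sum_subtractf)
  have S: "snd (lin h u n \<beta>) = (\<Sum>k<n. d k * \<beta> k) / D2"
    unfolding lin_def d_def[symmetric] VD using h by simp
  have "(real n * h) * ((\<Sum>k<n. \<beta> k) / real n)\<^sup>2 + Vv h u n * (snd (lin h u n \<beta>))\<^sup>2
      = h * ((\<Sum>k<n. \<beta> k)\<^sup>2 / real n + (\<Sum>k<n. d k * \<beta> k)\<^sup>2 / D2)"
    unfolding S VD using n D2 by (simp add: power2_eq_square field_simps)
  also have "\<dots> \<le> h * (\<Sum>k<n. (\<beta> k)\<^sup>2)"
    using bessel[OF n d0 D2[unfolded D2_def], of \<beta>] h unfolding D2_def by (intro mult_left_mono) auto
  finally show ?thesis .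
qed

lemma gc_cost:
  assumes adm: "admissible_curve \<nu> B" and n: "n > 0" and h: "h > 0" and V: "Vv h u n > 0"
    and u: "\<forall>k<n. u k \<in> {0<..<1}"
  defines "K \<equiv> max ((1 + \<bar>zbar u n\<bar>) / (real n * h)) ((1 + \<bar>zbar u n\<bar> + (zbar u n)\<^sup>2) / Vv h u n)"
  shows "espline_cost (Ac B h u n) \<le> ennreal (K * h) * (\<Sum>k<n. Gf \<nu> (u k))"
proof -
  have W: "real n * h > 0" using n h by simp
  have K1: "1 + \<bar>zbar u n\<bar> \<le> K * (real n * h)"
  proof -
    have "(1 + \<bar>zbar u n\<bar>) / (real n * h) \<le> K" unfolding K_def by simp
    then show ?thesis using W by (simp add: divide_le_eq)
  qed
  have K2: "1 + \<bar>zbar u n\<bar> + (zbar u n)\<^sup>2 \<le> K * Vv h u n"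
  proof -
    have "(1 + \<bar>zbar u n\<bar> + (zbar u n)\<^sup>2) / Vv h u n \<le> K" unfolding K_def by simp
    then show ?thesis using V by (simp add: divide_le_eq)
  qed
  have K0: "K \<ge> 0" unfolding K_def using W by (simp add: le_max_iff_disj)
  have inner: "(\<integral>\<^sup>+v. ennreal ((Ac B h u n t v)\<^sup>2) \<partial>lebesgue_on {0<..<1}) \<le> ennreal ((K * h) * (\<Sum>k<n. (B t (u k))\<^sup>2))" for t
  proof -
    define \<beta> where "\<beta> k = B t (u k)" for k
    define Pm where "Pm = (\<Sum>k<n. \<beta> k) / real n"
    define S where "S = snd (lin h u n \<beta>)"
    have fst: "fst (lin h u n \<beta>) = Pm - zbar u n * S" unfolding Pm_def S_def lin_def by simp
    have "(\<integral>\<^sup>+v. ennreal ((Ac B h u n t v)\<^sup>2) \<partial>lebesgue_on {0<..<1})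
        = (\<integral>\<^sup>+v. ennreal ((fst (lin h u n \<beta>) + S * zq v)\<^sup>2) \<partial>lebesgue_on {0<..<1})"
      unfolding Ac_def \<beta>_def[symmetric] S_def ..
    also have "\<dots> = ennreal ((fst (lin h u n \<beta>))\<^sup>2 + S\<^sup>2)" by (rule gauss_inner)
    finally have e1: "(\<integral>\<^sup>+v. ennreal ((Ac B h u n t v)\<^sup>2) \<partial>lebesgue_on {0<..<1}) = ennreal ((fst (lin h u n \<beta>))\<^sup>2 + S\<^sup>2)" .
    have "(fst (lin h u n \<beta>))\<^sup>2 + S\<^sup>2 = Pm\<^sup>2 - 2 * Pm * S * zbar u n + S\<^sup>2 * (1 + (zbar u n)\<^sup>2)"
      unfolding fst by (simp add: power2_eq_square algebra_simps)
    also have "\<dots> \<le> K * (h * (\<Sum>k<n. (\<beta> k)\<^sup>2))"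
    proof (rule inner_bound[OF W V K1 K2])
      show "real n * h * Pm\<^sup>2 + Vv h u n * S\<^sup>2 \<le> h * (\<Sum>k<n. (\<beta> k)\<^sup>2)"
        unfolding Pm_def S_def by (rule bes_apply[OF n h V])
    qed
    finally have r: "(fst (lin h u n \<beta>))\<^sup>2 + S\<^sup>2 \<le> K * (h * (\<Sum>k<n. (\<beta> k)\<^sup>2))" .
    show ?thesis unfolding e1 \<beta>_def[symmetric]
      by (rule ennreal_leI) (use r in \<open>simp add: ac_simps\<close>)
  qed
  have "espline_cost (Ac B h u n) \<le> (\<integral>\<^sup>+t. ennreal ((K * h) * (\<Sum>k<n. (B t (u k))\<^sup>2)) \<partial>lebesgue_on {0..1})"
    unfolding espline_cost_def by (rule nn_integral_mono) (rule inner)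
  also have "\<dots> = ennreal (K * h) * (\<Sum>k<n. Gf \<nu> (u k))"
    by (rule G_eq[OF adm]) (use K0 h u in auto)
  finally show ?thesis .
qed

lemma claim:
  fixes N :: nat and tt :: "nat \<Rightarrow> real" and \<mu>s :: "nat \<Rightarrow> real measure"
    and \<gamma> :: "real \<Rightarrow> real measure" and A :: "real \<Rightarrow> real \<Rightarrow> real" and \<eta> :: real
  assumes data_gauss: "\<And>i. i \<le> N \<Longrightarrow> is_gaussian (\<mu>s i)"
    and opt: "\<And>\<gamma>' A'. admissible_curve \<gamma>' A' \<Longrightarrow> (\<forall>t\<in>{0..1}. is_gaussian (\<gamma>' t)) \<Longrightarrow>
                interpolates \<gamma>' N tt \<mu>s \<Longrightarrow> espline_cost A \<le> espline_cost A'"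
    and admB: "admissible_curve \<nu> B" and interpB: "interpolates \<nu> N tt \<mu>s"
    and fin: "espline_cost B < \<infinity>"
    and eta: "0 < \<eta>" "\<eta> \<le> 1/8"
  shows "espline_cost A \<le> ennreal ((1 + 3 * \<eta>) / (1 - 2 * \<eta>)) * (espline_cost B + ennreal \<eta>)"
proof -
  obtain a n where an: "0 < a" "a \<le> \<eta>" "0 < n" "2 * a < 1"
    and gr: "\<And>u. (\<forall>k<n. u k \<in> {a + real k * ((1 - 2*a) / real n) .. a + real (Suc k) * ((1 - 2*a) / real n)}) \<Longrightarrow>
       \<bar>((1 - 2*a) / real n) * (\<Sum>k<n. zq (u k))\<bar> \<le> \<eta> \<and>
       \<bar>((1 - 2*a) / real n) * (\<Sum>k<n. (zq (u k))^2) - 1\<bar> \<le> \<eta>"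
    using grid[OF eta(1)] by blast
  define h where "h = (1 - 2*a) / real n"
  have h: "h > 0" unfolding h_def using an by simp
  have nh: "real n * h = 1 - 2 * a" unfolding h_def using an by simp
  have anh: "a + real n * h \<le> 1" using nh an by simp
  have costB: "espline_cost B = (\<integral>\<^sup>+ u. Gf \<nu> u * indicator {0<..<1} u \<partial>lborel)"
    by (rule cost_eq[OF admB])
  obtain u where ucell: "\<forall>k<n. u k \<in> {a + real k * h<..<a + real (Suc k) * h}"
    and usum: "ennreal h * (\<Sum>k<n. Gf \<nu> (u k)) \<le> (\<integral>\<^sup>+u. Gf \<nu> u * indicator {0<..<1} u \<partial>lborel) + ennreal \<eta>"
    using select_all[OF meas_Gf[OF admB] h _ anh _ eta(1)] an fin costB by auto
  have u01: "\<forall>k<n. u k \<in> {0<..<1}"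
  proof (intro allI impI)
    fix k assume k: "k < n"
    have m1: "real (Suc k) * h \<le> real n * h" using h k by (intro mult_right_mono) auto
    have x1: "a + real k * h < u k" and x2: "u k < a + real (Suc k) * h"
      using ucell k by auto
    have "0 \<le> real k * h" using h by simp
    then have "0 < u k" "u k < 1" using x1 x2 m1 an anh by linarith+
    then show "u k \<in> {0<..<1}" by simp
  qed
  have g: "\<bar>h * (\<Sum>k<n. zq (u k))\<bar> \<le> \<eta> \<and> \<bar>h * (\<Sum>k<n. (zq (u k))^2) - 1\<bar> \<le> \<eta>"
    unfolding h_def by (rule gr) (use ucell in \<open>auto simp: h_def\<close>)
  define zb where "zb = zbar u n"
  define W where "W = real n * h"
  have W: "W = 1 - 2 * a" unfolding W_def nh ..
  have Wb: "1 - 2 * \<eta> \<le> W" "W \<le> 1" using W an by auto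
  have W0: "W \<ge> 0" using Wb eta by linarith
  have s1: "h * (\<Sum>k<n. zq (u k)) = W * zb"
    unfolding W_def zb_def zbar_def using an by simp
  have Veq: "Vv h u n = h * (\<Sum>k<n. (zq (u k))^2) - W * zb\<^sup>2"
  proof -
    have E: "(\<Sum>k<n. (zq (u k) - zb)\<^sup>2) = (\<Sum>k<n. (zq (u k))^2) - 2 * zb * (\<Sum>k<n. zq (u k)) + real n * zb\<^sup>2"
      by (simp add: power2_eq_square algebra_simps sum.distrib sum_subtractf sum_distrib_left)
    have "Vv h u n = h * (\<Sum>k<n. (zq (u k))^2) - 2 * zb * (h * (\<Sum>k<n. zq (u k))) + W * zb\<^sup>2"
      unfolding Vv_def zb_def[symmetric] E W_def by (simp add: algebra_simps)
    then show ?thesis unfolding s1 by (simp add: power2_eq_square algebra_simps)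
  qed
  have zbb: "\<bar>zb\<bar> \<le> 2 * \<eta>"
  proof -
    have "W * \<bar>zb\<bar> \<le> \<eta>" using g s1 W0 by (simp add: abs_mult)
    moreover have "W \<ge> 1/2" using Wb eta by linarith
    ultimately have "(1/2) * \<bar>zb\<bar> \<le> \<eta>"
      by (smt (verit) abs_ge_zero mult_right_mono)
    then show ?thesis by simp
  qed
  have zb2: "zb\<^sup>2 \<le> \<eta> / 2"
  proof -
    have "zb\<^sup>2 = \<bar>zb\<bar> * \<bar>zb\<bar>" by (simp add: power2_eq_square)
    also have "\<dots> \<le> (2 * \<eta>) * (2 * \<eta>)" using zbb by (intro mult_mono) auto
    also have "\<dots> \<le> \<eta> / 2" using eta by (simp add: algebra_simps)
    finally show ?thesis .
  qed
  have Vb: "Vv h u n \<ge> 1 - 2 * \<eta>"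
  proof -
    have "W * zb\<^sup>2 \<le> zb\<^sup>2" using Wb W0 by (intro mult_left_le_one_le) auto
    then show ?thesis unfolding Veq using g zb2 by linarith
  qed
  have V: "Vv h u n > 0" using Vb eta by linarith
  define K where "K = max ((1 + \<bar>zbar u n\<bar>) / (real n * h)) ((1 + \<bar>zbar u n\<bar> + (zbar u n)\<^sup>2) / Vv h u n)"
  have den: "1 - 2 * \<eta> > 0" using eta by simp
  have Kb: "K \<le> (1 + 3 * \<eta>) / (1 - 2 * \<eta>)"
  proof -
    have "(1 + \<bar>zb\<bar>) / W \<le> (1 + 3 * \<eta>) / W" using zbb Wb den eta by (intro divide_right_mono) auto
    also have "\<dots> \<le> (1 + 3 * \<eta>) / (1 - 2 * \<eta>)" using Wb den eta by (intro divide_left_mono) auto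
    finally have k1: "(1 + \<bar>zb\<bar>) / W \<le> (1 + 3 * \<eta>) / (1 - 2 * \<eta>)" .
    have "(1 + \<bar>zb\<bar> + zb\<^sup>2) / Vv h u n \<le> (1 + 3 * \<eta>) / Vv h u n"
      using zbb zb2 V eta by (intro divide_right_mono) auto
    also have "\<dots> \<le> (1 + 3 * \<eta>) / (1 - 2 * \<eta>)" using Vb den eta by (intro divide_left_mono) auto
    finally have k2: "(1 + \<bar>zb\<bar> + zb\<^sup>2) / Vv h u n \<le> (1 + 3 * \<eta>) / (1 - 2 * \<eta>)" .
    show ?thesis unfolding K_def using k1 k2 unfolding zb_def W_def by simp
  qed
  have K0: "K \<ge> 0" unfolding K_def using h an by (simp add: le_max_iff_disj)
  have "espline_cost A \<le> espline_cost (Ac B h u n)"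
  proof (rule opt)
    show "admissible_curve (gc \<nu> h u n) (Ac B h u n)" by (rule gc_adm[OF admB an(3) h V u01])
    show "\<forall>t\<in>{0..1}. is_gaussian (gc \<nu> h u n t)"
      using sc_nonneg[OF admB an(3) h V u01] unfolding is_gaussian_def gc_def by blast
    show "interpolates (gc \<nu> h u n) N tt \<mu>s" by (rule gc_interp[OF admB an(3) h V u01 interpB data_gauss])
  qed
  also have "\<dots> \<le> ennreal (K * h) * (\<Sum>k<n. Gf \<nu> (u k))"
    unfolding K_def by (rule gc_cost[OF admB an(3) h V u01])
  also have "\<dots> = ennreal K * (ennreal h * (\<Sum>k<n. Gf \<nu> (u k)))"
    using K0 h by (simp add: ennreal_mult mult.assoc)
  also have "\<dots> \<le> ennreal K * (espline_cost B + ennreal \<eta>)"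
    using usum costB by (intro mult_left_mono) auto
  also have "\<dots> \<le> ennreal ((1 + 3 * \<eta>) / (1 - 2 * \<eta>)) * (espline_cost B + ennreal \<eta>)"
    using Kb by (intro mult_right_mono ennreal_leI) auto
  finally show ?thesis .
qed


theorem proposition9:
  fixes N :: nat and tt :: "nat \<Rightarrow> real" and \<mu>s :: "nat \<Rightarrow> real measure"
    and \<gamma> :: "real \<Rightarrow> real measure" and A :: "real \<Rightarrow> real \<Rightarrow> real"
  assumes N: "N \<ge> 1"
    and t0: "tt 0 = 0" and tN: "tt N = 1"
    and t_mono: "\<And>i. i < N \<Longrightarrow> tt i < tt (Suc i)"
    and data_gauss: "\<And>i. i \<le> N \<Longrightarrow> is_gaussian (\<mu>s i)"
    and adm: "admissible_curve \<gamma> A"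
    and gauss: "\<forall>t\<in>{0..1}. is_gaussian (\<gamma> t)"
    and interp: "interpolates \<gamma> N tt \<mu>s"
    and opt: "\<And>\<gamma>' A'. admissible_curve \<gamma>' A' \<Longrightarrow> (\<forall>t\<in>{0..1}. is_gaussian (\<gamma>' t)) \<Longrightarrow>
                interpolates \<gamma>' N tt \<mu>s \<Longrightarrow> espline_cost A \<le> espline_cost A'"
    and nondeg: "\<forall>t\<in>{0..1}. nondeg_gaussian (\<gamma> t)"
  shows "\<forall>\<nu> B. admissible_curve \<nu> B \<and> interpolates \<nu> N tt \<mu>s \<longrightarrow> espline_cost A \<le> espline_cost B"
proof (intro allI impI, elim conjE)
  fix \<nu> B assume admB: "admissible_curve \<nu> B" and interpB: "interpolates \<nu> N tt \<mu>s"
  show "espline_cost A \<le> espline_cost B"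
  proof (cases "espline_cost B = \<infinity>")
    case True
    then show ?thesis by simp
  next
    case False
    then have fin: "espline_cost B < \<infinity>" by (simp add: less_top)
    obtain c where c: "espline_cost B = ennreal c" "c \<ge> 0"
      using fin by (cases "espline_cost B" rule: ennreal_cases) auto
    define f where "f \<eta> = (1 + 3 * \<eta>) / (1 - 2 * \<eta>) * (c + \<eta>)" for \<eta> :: real
    have cl: "espline_cost A \<le> ennreal (f \<eta>)" if "0 < \<eta>" "\<eta> \<le> 1/8" for \<eta>
    proof -
      have p: "(1 + 3 * \<eta>) / (1 - 2 * \<eta>) \<ge> 0" using that by simp
      have "espline_cost A \<le> ennreal ((1 + 3 * \<eta>) / (1 - 2 * \<eta>)) * (espline_cost B + ennreal \<eta>)"
        by (rule claim[OF data_gauss opt admB interpB fin that])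
      also have "\<dots> = ennreal (f \<eta>)"
      proof -
        have "espline_cost B + ennreal \<eta> = ennreal (c + \<eta>)"
          unfolding c(1) using c(2) that by (simp add: ennreal_plus[symmetric] del: ennreal_plus)
        moreover have "ennreal ((1 + 3 * \<eta>) / (1 - 2 * \<eta>)) * ennreal (c + \<eta>) = ennreal (f \<eta>)"
          unfolding f_def by (rule ennreal_mult[symmetric]) (use p c(2) that in auto)
        ultimately show ?thesis by simp
      qed
      finally show ?thesis .
    qed
    have fpos: "f \<eta> \<ge> 0" if "0 < \<eta>" "\<eta> \<le> 1/8" for \<eta>
      unfolding f_def using that c(2) by simp
    have "espline_cost A < \<infinity>" using cl[of "1/8"] by (simp add: le_less_trans)
    then obtain a where a: "espline_cost A = ennreal a" "a \<ge> 0"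
      by (cases "espline_cost A" rule: ennreal_cases) auto
    have le: "a \<le> f \<eta>" if "0 < \<eta>" "\<eta> \<le> 1/8" for \<eta>
      using cl[OF that] fpos[OF that] a by (simp add: ennreal_le_iff)
    have lim: "(f \<longlongrightarrow> c) (at_right 0)"
    proof -
      have "((\<lambda>\<eta>::real. (1 + 3 * \<eta>) / (1 - 2 * \<eta>) * (c + \<eta>)) \<longlongrightarrow> (1 + 3 * 0) / (1 - 2 * 0) * (c + 0)) (at_right 0)"
        by (intro tendsto_intros) auto
      then show ?thesis unfolding f_def by simp
    qed
    have ev: "eventually (\<lambda>\<eta>. a \<le> f \<eta>) (at_right 0)"
      unfolding eventually_at_right_field
      by (rule exI[of _ "1/8"]) (auto intro: le)
    have "a \<le> c" by (rule tendsto_lowerbound[OF lim ev]) simp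
    then show ?thesis using a c by (simp add: ennreal_leI)
  qed
qed

end
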